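(* Let $G=(V,E,H)$ be a HEDG, $\mathbb{P}_V$ a probability distribution on $\mathcal{X}_V=\prod_{v\in V}\mathcal{X}_v$ (standard Borel spaces) and $<$ a total order on $V$. Then $(G,\mathbb{P}_V,<)$ satisfies the ordered local Markov property if and only if it satisfies the recursive factorization property.
   Context: HEDG $G=(V,E,H)$: $V$ finite, $E\subseteq V\times V$ (self-loops allowed), $H$ a simplicial complex on $V$ (contains singletons, closed under subsets); $v\leftrightarrow w$ for distinct $v,w$ with $\{v,w\}\in H$. $A$ is ancestral if it contains all nodes with a directed path into $A$, with induced sub-HEDG structure. Marginalization $G^{\mathrm{marg}\setminus U}=(V\setminus U,E',H')$: $v_1\to v_2\in E'$ iff a directed path $v_1\to u_1\to\cdots\to u_r\to v_2$ ($r\ge0$, $u_i\in U$) exists; $F'\in H'$ iff there is $F\in H$, $F\subseteq F'\cup U$, each $v\in F'$ in $F\setminus U$ or reached by a directed path $u_1\to\cdots\to u_r\to v$ ($r\ge1$, $u_i\in U$, $u_1\in F$). Moralization: $v - w$ ($v\ne w$) iff there are $v_1,\dots,v_n$ with $v\in\{v_1\}\cup\mathrm{Pa}(v_1)$, $w\in\{v_n\}\cup\mathrm{Pa}(v_n)$, $v_1\leftrightarrow\cdots\leftrightarrow v_n$; $\partial_U(v)$ = neighbours in undirected graph $U$. For a HEDG $A$ (e.g. an ancestral sub-HEDG of $G$) and $v\in A$: $\mathrm{Pred}^A_\le(v)=A^{\mathrm{marg}\setminus\{w\in A:w>v\}}$, and $\partial^A_\le(v):=\partial_{\mathrm{Pred}^A_\le(v)^{\mathrm{moral}}}(v)$.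 Ordered local Markov property: for all $v\in V$ and every ancestral sub-HEDG $A$ of $\mathrm{Pred}^G_\le(v)$ with $v\in A$: $\{v\}\perp_{\mathbb{P}_V}A\setminus\{v\}\mid\partial_{A^{\mathrm{moral}}}(v)$ (conditional independence of coordinate projections). Recursive factorization property: for every ancestral sub-HEDG $A$ of $G$ and every measurable product set $B=\prod_{v\in A}B_v\subseteq\mathcal{X}_A$, $\mathbb{P}_A(B)=\int\cdots\int\prod_{v\in A}\mathbf 1_{B_v}(x_v)\,d\mathbb{P}_V^{v\mid x_{\partial^A_\le(v)}}(x_v)$, where the iterated integration is taken from the largest $v\in A$ (innermost) to the smallest (outermost) with respect to $<$, $\mathbb{P}_V^{v\mid x_{\partial^A_\le(v)}}$ is the regular conditional distribution of the $v$-coordinate given the coordinates in $\partial^A_\le(v)$ at the value $x_{\partial^A_\le(v)}$, and $\mathbb{P}_A$ is the marginal on $\mathcal{X}_A$. *)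

theory Defs
  imports "HOL-Probability.Probability"
begin

record 'v hedg =
  nodes :: "'v set"
  edges :: "('v \<times> 'v) set"
  hyper :: "'v set set"

text \<open>A HEDG (V,E,H): V finite, E a set of directed edges on V (self-loops allowed),
  H a simplicial complex on V (contains all singletons, closed under subsets).\<close>
definition is_hedg :: "'v hedg \<Rightarrow> bool" where
  "is_hedg G \<longleftrightarrow> finite (nodes G) \<and> edges G \<subseteq> nodes G \<times> nodes G
     \<and> (\<forall>F\<in>hyper G. F \<subseteq> nodes G)
     \<and> (\<forall>v\<in>nodes G. {v} \<in> hyper G)
     \<and> (\<forall>F\<in>hyper G. \<forall>F'. F' \<subseteq> F \<longrightarrow> F' \<in> hyper G)"

text \<open>Bidirected edge v <-> w: v, w distinct and {v,w} a hyperedge.\<close>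
definition bidir :: "'v hedg \<Rightarrow> 'v \<Rightarrow> 'v \<Rightarrow> bool" where
  "bidir G v w \<longleftrightarrow> v \<noteq> w \<and> {v, w} \<in> hyper G"

definition parents :: "'v hedg \<Rightarrow> 'v \<Rightarrow> 'v set" where
  "parents G v = {u. (u, v) \<in> edges G}"

definition dpath :: "'v hedg \<Rightarrow> 'v list \<Rightarrow> bool" where
  "dpath G xs \<longleftrightarrow> successively (\<lambda>a b. (a, b) \<in> edges G) xs"

definition ancestral :: "'v hedg \<Rightarrow> 'v set \<Rightarrow> bool" where
  "ancestral G A \<longleftrightarrow> A \<subseteq> nodes G \<and> (\<forall>w a. a \<in> A \<longrightarrow> (w, a) \<in> (edges G)\<^sup>* \<longrightarrow> w \<in> A)"

definition induced :: "'v hedg \<Rightarrow> 'v set \<Rightarrow> 'v hedg" where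
  "induced G A = \<lparr> nodes = A, edges = edges G \<inter> (A \<times> A), hyper = {F \<in> hyper G. F \<subseteq> A} \<rparr>"

definition marg :: "'v hedg \<Rightarrow> 'v set \<Rightarrow> 'v hedg" where
  "marg G U = \<lparr> nodes = nodes G - U,
     edges = {(v1, v2). v1 \<in> nodes G - U \<and> v2 \<in> nodes G - U \<and>
                (\<exists>us. set us \<subseteq> U \<and> dpath G (v1 # us @ [v2]))},
     hyper = {F'. F' \<subseteq> nodes G - U \<and>
                (\<exists>F \<in> hyper G. F \<subseteq> F' \<union> U \<and>
                   (\<forall>v \<in> F'. v \<in> F - U \<or>
                      (\<exists>us. us \<noteq> [] \<and> set us \<subseteq> U \<and> hd us \<in> F \<and> dpath G (us @ [v]))))} \<rparr>"

definition moral_adj :: "'v hedg \<Rightarrow> 'v \<Rightarrow> 'v \<Rightarrow> bool" where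
  "moral_adj G v w \<longleftrightarrow> v \<noteq> w \<and>
     (\<exists>vs. vs \<noteq> [] \<and> set vs \<subseteq> nodes G \<and>
        v \<in> {hd vs} \<union> parents G (hd vs) \<and>
        w \<in> {last vs} \<union> parents G (last vs) \<and>
        successively (bidir G) vs)"

definition moral_nbrs :: "'v hedg \<Rightarrow> 'v \<Rightarrow> 'v set" where
  "moral_nbrs G v = {w \<in> nodes G. moral_adj G v w}"

text \<open>The total order is given as a strict relation r; (v, w) \<in> r means v < w.
  Pred_\<le>(v) = G^{marg \ {w : w > v}}.\<close>
definition Pred_le :: "'v hedg \<Rightarrow> ('v \<times> 'v) set \<Rightarrow> 'v \<Rightarrow> 'v hedg" where
  "Pred_le G r v = marg G {w \<in> nodes G. (v, w) \<in> r}"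

definition pred_bd :: "'v hedg \<Rightarrow> ('v \<times> 'v) set \<Rightarrow> 'v \<Rightarrow> 'v set" where
  "pred_bd A r v = moral_nbrs (Pred_le A r v) v"

definition standard_borel :: "'x measure \<Rightarrow> bool" where
  "standard_borel M \<longleftrightarrow> (\<exists>X. completely_metrizable_space X \<and> separable_space X \<and>
      topspace X = space M \<and> sets M = sigma_sets (topspace X) {U. openin X U})"

definition coord_algebra :: "('v \<Rightarrow> 'x) measure \<Rightarrow> ('v \<Rightarrow> 'x measure) \<Rightarrow> 'v set \<Rightarrow> ('v \<Rightarrow> 'x) measure" where
  "coord_algebra P M Z = vimage_algebra (space P) (\<lambda>x. restrict x Z) (PiM Z M)"

definition cond_indep :: "('v \<Rightarrow> 'x) measure \<Rightarrow> ('v \<Rightarrow> 'x measure) \<Rightarrow> 'v set \<Rightarrow> 'v set \<Rightarrow> 'v set \<Rightarrow> bool" where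
  "cond_indep P M X Y Z \<longleftrightarrow>
     (\<forall>S \<in> sets (PiM X M). \<forall>T \<in> sets (PiM Y M).
        let SX = {x \<in> space P. restrict x X \<in> S}; TY = {x \<in> space P. restrict x Y \<in> T};
            F = coord_algebra P M Z in
        AE x in P. real_cond_exp P F (indicator (SX \<inter> TY)) x
                 = real_cond_exp P F (indicator SX) x * real_cond_exp P F (indicator TY) x)"

definition is_rcd :: "('v \<Rightarrow> 'x) measure \<Rightarrow> ('v \<Rightarrow> 'x measure) \<Rightarrow> 'v \<Rightarrow> 'v set
    \<Rightarrow> (('v \<Rightarrow> 'x) \<Rightarrow> 'x measure) \<Rightarrow> bool" where
  "is_rcd P M v C k \<longleftrightarrow> k \<in> PiM C M \<rightarrow>\<^sub>M prob_algebra (M v) \<and>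
     (\<forall>B \<in> sets (M v). \<forall>D \<in> sets (PiM C M).
        emeasure P {x \<in> space P. x v \<in> B \<and> restrict x C \<in> D}
        = (\<integral>\<^sup>+ x. indicator D (restrict x C) * emeasure (k (restrict x C)) B \<partial>P))"

fun iter_int :: "('v \<Rightarrow> 'v set \<Rightarrow> ('v \<Rightarrow> 'x) \<Rightarrow> 'x measure) \<Rightarrow> ('v \<Rightarrow> 'v set) \<Rightarrow> ('v \<Rightarrow> 'x set)
    \<Rightarrow> 'v list \<Rightarrow> ('v \<Rightarrow> 'x) \<Rightarrow> ennreal" where
  "iter_int K Cs B [] x = 1"
| "iter_int K Cs B (v # vs) x =
     (\<integral>\<^sup>+ y. indicator (B v) y * iter_int K Cs B vs (x(v := y)) \<partial>(K v (Cs v) (restrict x (Cs v))))"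

definition sorted_nodes :: "('v \<times> 'v) set \<Rightarrow> 'v set \<Rightarrow> 'v list" where
  "sorted_nodes r A = (SOME xs. set xs = A \<and> distinct xs \<and> sorted_wrt (\<lambda>a b. (a, b) \<in> r) xs)"

definition ordered_local_markov :: "'v hedg \<Rightarrow> ('v \<Rightarrow> 'x measure) \<Rightarrow> ('v \<Rightarrow> 'x) measure
    \<Rightarrow> ('v \<times> 'v) set \<Rightarrow> bool" where
  "ordered_local_markov G M P r \<longleftrightarrow>
     (\<forall>v \<in> nodes G. \<forall>A. ancestral (Pred_le G r v) A \<and> v \<in> A \<longrightarrow>
        cond_indep P M {v} (A - {v}) (moral_nbrs (induced (Pred_le G r v) A) v))"

definition recursive_factorization :: "'v hedg \<Rightarrow> ('v \<Rightarrow> 'x measure) \<Rightarrow> ('v \<Rightarrow> 'x) measure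
    \<Rightarrow> ('v \<times> 'v) set \<Rightarrow> ('v \<Rightarrow> 'v set \<Rightarrow> ('v \<Rightarrow> 'x) \<Rightarrow> 'x measure) \<Rightarrow> bool" where
  "recursive_factorization G M P r K \<longleftrightarrow>
     (\<forall>A B. ancestral G A \<and> (\<forall>v \<in> A. B v \<in> sets (M v)) \<longrightarrow>
        emeasure (distr P (PiM A M) (\<lambda>x. restrict x A)) (PiE A B)
        = iter_int K (pred_bd (induced G A) r) B (sorted_nodes r A) (\<lambda>_. undefined))"

end

theory Submission
  imports Defs
begin

fun goodk :: "('v \<Rightarrow> ('v \<Rightarrow> 'x) \<Rightarrow> 'x measure) \<Rightarrow> ('v \<Rightarrow> 'x measure) \<Rightarrow> 'v set \<Rightarrow> 'v list \<Rightarrow> bool" where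
  "goodk Kc M J [] = True"
| "goodk Kc M J (v # vs) = (v \<notin> J \<and> Kc v \<in> PiM J M \<rightarrow>\<^sub>M prob_algebra (M v) \<and> goodk Kc M (insert v J) vs)"

fun kap :: "('v \<Rightarrow> ('v \<Rightarrow> 'x) \<Rightarrow> 'x measure) \<Rightarrow> ('v \<Rightarrow> 'x measure) \<Rightarrow> 'v set \<Rightarrow> 'v list \<Rightarrow> ('v \<Rightarrow> 'x) \<Rightarrow> ('v \<Rightarrow> 'x) measure" where
  "kap Kc M J [] x = return (PiM J M) x"
| "kap Kc M J (v # vs) x = Kc v x \<bind> (\<lambda>y. kap Kc M (insert v J) vs (x(v := y)))"

fun itf :: "('v \<Rightarrow> ('v \<Rightarrow> 'x) \<Rightarrow> 'x measure) \<Rightarrow> 'v list \<Rightarrow> (('v \<Rightarrow> 'x) \<Rightarrow> ennreal) \<Rightarrow> ('v \<Rightarrow> 'x) \<Rightarrow> ennreal" where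
  "itf Kc [] f x = f x"
| "itf Kc (v # vs) f x = (\<integral>\<^sup>+ y. itf Kc vs f (x(v := y)) \<partial>(Kc v x))"

lemma kap_meas:
  "goodk Kc M J vs \<Longrightarrow> kap Kc M J vs \<in> PiM J M \<rightarrow>\<^sub>M prob_algebra (PiM (J \<union> set vs) M)"
proof (induction vs arbitrary: J)
  case Nil
  then show ?case by simp
next
  case (Cons v vs)
  have Kv: "Kc v \<in> PiM J M \<rightarrow>\<^sub>M prob_algebra (M v)" and g: "goodk Kc M (insert v J) vs" and vJ: "v \<notin> J"
    using Cons.prems by auto
  have IH: "kap Kc M (insert v J) vs \<in> PiM (insert v J) M \<rightarrow>\<^sub>M prob_algebra (PiM (J \<union> set (v # vs)) M)"
    using Cons.IH[OF g] by simp
  have upd: "(\<lambda>(x, y). x(v := y)) \<in> PiM J M \<Otimes>\<^sub>M M v \<rightarrow>\<^sub>M PiM (insert v J) M"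
    by (rule measurable_add_dim)
  have m2: "(\<lambda>(x, y). kap Kc M (insert v J) vs (x(v := y))) \<in> PiM J M \<Otimes>\<^sub>M M v \<rightarrow>\<^sub>M prob_algebra (PiM (J \<union> set (v # vs)) M)"
    using measurable_compose[OF upd IH] by (simp add: case_prod_unfold)
  have sub: "(\<lambda>x. Kc v x \<bind> (\<lambda>y. kap Kc M (insert v J) vs (x(v := y)))) \<in> PiM J M \<rightarrow>\<^sub>M subprob_algebra (PiM (J \<union> set (v # vs)) M)"
    by (rule measurable_bind'[OF measurable_prob_algebraD[OF Kv]]) (use measurable_prob_algebraD[OF m2] in simp)
  show ?case
  proof (simp, rule measurable_prob_algebraI[OF _ sub[simplified]])
    fix x assume x: "x \<in> space (PiM J M)"
    have px: "prob_space (Kc v x)" using measurable_space[OF Kv x] by (simp add: space_prob_algebra)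
    have sx: "sets (Kc v x) = sets (M v)" using measurable_space[OF Kv x] by (simp add: space_prob_algebra)
    have m3: "(\<lambda>y. kap Kc M (insert v J) vs (x(v := y))) \<in> Kc v x \<rightarrow>\<^sub>M subprob_algebra (PiM (J \<union> set (v # vs)) M)"
      using measurable_compose[OF measurable_component_update[OF x vJ] measurable_prob_algebraD[OF IH]]
      by (simp add: measurable_cong_sets[OF sx refl])
    show "prob_space (Kc v x \<bind> (\<lambda>y. kap Kc M (insert v J) vs (x(v := y))))"
    proof (rule prob_space.prob_space_bind[OF px _ m3])
      show "AE y in Kc v x. prob_space (kap Kc M (insert v J) vs (x(v := y)))"
      proof (rule AE_I2)
        fix y assume "y \<in> space (Kc v x)"
        then have "x(v := y) \<in> space (PiM (insert v J) M)"
          using measurable_space[OF measurable_component_update[OF x vJ]] sets_eq_imp_space_eq[OF sx] by auto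
        then show "prob_space (kap Kc M (insert v J) vs (x(v := y)))"
          using measurable_space[OF IH] by (simp add: space_prob_algebra)
      qed
    qed
  qed
qed


lemma goodk_space:
  assumes "goodk Kc M J (v # vs)" "x \<in> space (PiM J M)"
  shows "prob_space (Kc v x)" "sets (Kc v x) = sets (M v)" "space (Kc v x) = space (M v)"
proof -
  have "Kc v x \<in> space (prob_algebra (M v))" using assms by (auto intro: measurable_space)
  then show "prob_space (Kc v x)" "sets (Kc v x) = sets (M v)" "space (Kc v x) = space (M v)"
    by (auto simp: space_prob_algebra intro!: sets_eq_imp_space_eq)
qed

lemma upd_space:
  "x \<in> space (PiM J M) \<Longrightarrow> y \<in> space (M v) \<Longrightarrow> x(v := y) \<in> space (PiM (insert v J) M)"
  by (auto simp: space_PiM PiE_iff extensional_def)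

lemma kap_nn:
  assumes "goodk Kc M J vs" "x \<in> space (PiM J M)" "f \<in> borel_measurable (PiM (J \<union> set vs) M)"
  shows "(\<integral>\<^sup>+ z. f z \<partial>kap Kc M J vs x) = itf Kc vs f x"
  using assms
proof (induction vs arbitrary: J x)
  case Nil
  then show ?case by (simp add: nn_integral_return)
next
  case (Cons v vs)
  have Kv: "Kc v \<in> PiM J M \<rightarrow>\<^sub>M prob_algebra (M v)" and g: "goodk Kc M (insert v J) vs" and vJ: "v \<notin> J"
    using Cons.prems by auto
  have IH: "kap Kc M (insert v J) vs \<in> PiM (insert v J) M \<rightarrow>\<^sub>M prob_algebra (PiM (J \<union> set (v # vs)) M)"
    using kap_meas[OF g] by simp
  note sp = goodk_space[OF Cons.prems(1,2)]
  have m3: "(\<lambda>y. kap Kc M (insert v J) vs (x(v := y))) \<in> Kc v x \<rightarrow>\<^sub>M subprob_algebra (PiM (J \<union> set (v # vs)) M)"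
    using measurable_compose[OF measurable_component_update[OF Cons.prems(2) vJ] measurable_prob_algebraD[OF IH]]
    by (simp add: measurable_cong_sets[OF sp(2) refl])
  have "(\<integral>\<^sup>+ z. f z \<partial>kap Kc M J (v # vs) x) = (\<integral>\<^sup>+ y. \<integral>\<^sup>+ z. f z \<partial>kap Kc M (insert v J) vs (x(v := y)) \<partial>Kc v x)"
    using nn_integral_bind[OF Cons.prems(3) m3] by simp
  also have "\<dots> = (\<integral>\<^sup>+ y. itf Kc vs f (x(v := y)) \<partial>Kc v x)"
  proof (rule nn_integral_cong)
    fix y assume "y \<in> space (Kc v x)"
    then have "x(v := y) \<in> space (PiM (insert v J) M)" using upd_space[OF Cons.prems(2)] sp(3) by auto
    then show "(\<integral>\<^sup>+ z. f z \<partial>kap Kc M (insert v J) vs (x(v := y))) = itf Kc vs f (x(v := y))"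
      using Cons.IH[OF g] Cons.prems(3) by simp
  qed
  finally show ?case by simp
qed

lemma itf_cong:
  assumes "goodk Kc M J vs" "x \<in> space (PiM J M)" "\<And>z. z \<in> space (PiM (J \<union> set vs) M) \<Longrightarrow> f z = g z"
  shows "itf Kc vs f x = itf Kc vs g x"
  using assms
proof (induction vs arbitrary: J x)
  case Nil
  then show ?case by simp
next
  case (Cons v vs)
  note sp = goodk_space[OF Cons.prems(1,2)]
  show ?case
  proof (simp, rule nn_integral_cong)
    fix y assume "y \<in> space (Kc v x)"
    then have "x(v := y) \<in> space (PiM (insert v J) M)" using upd_space[OF Cons.prems(2)] sp(3) by auto
    moreover have "\<And>z. z \<in> space (PiM (insert v J \<union> set vs) M) \<Longrightarrow> f z = g z"
      using Cons.prems(3) by simp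
    moreover have "goodk Kc M (insert v J) vs" using Cons.prems(1) by simp
    ultimately show "itf Kc vs f (x(v := y)) = itf Kc vs g (x(v := y))"
      by (rule Cons.IH[rotated])
  qed
qed

lemma itf_append: "itf Kc (vs @ ws) f x = itf Kc vs (itf Kc ws f) x"
  by (induction vs arbitrary: x) auto

lemma itf_const1:
  assumes "goodk Kc M J vs" "x \<in> space (PiM J M)"
  shows "itf Kc vs (\<lambda>_. 1) x = 1"
  using assms
proof (induction vs arbitrary: J x)
  case Nil
  then show ?case by simp
next
  case (Cons v vs)
  note sp = goodk_space[OF Cons.prems(1,2)]
  have "itf Kc (v # vs) (\<lambda>_. 1) x = (\<integral>\<^sup>+ y. 1 \<partial>Kc v x)"
    unfolding itf.simps
  proof (rule nn_integral_cong)
    fix y assume "y \<in> space (Kc v x)"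
    then have "x(v := y) \<in> space (PiM (insert v J) M)" using upd_space[OF Cons.prems(2)] sp(3) by auto
    moreover have "goodk Kc M (insert v J) vs" using Cons.prems(1) by simp
    ultimately show "itf Kc vs (\<lambda>_. 1) (x(v := y)) = 1"
      by (rule Cons.IH[rotated])
  qed
  also have "\<dots> = 1" using prob_space.emeasure_space_1[OF sp(1)] by simp
  finally show ?case .
qed

lemma itf_pull:
  assumes "\<And>z u y. u \<in> set vs \<Longrightarrow> (z(u := y) \<in> Q) = (z \<in> Q)"
  shows "itf Kc vs (\<lambda>z. indicator Q z * f z) x = indicator Q x * itf Kc vs f x"
  using assms
proof (induction vs arbitrary: x)
  case Nil
  then show ?case by simp
next
  case (Cons v vs)
  have "itf Kc (v # vs) (\<lambda>z. indicator Q z * f z) x = (\<integral>\<^sup>+ y. indicator Q (x(v := y)) * itf Kc vs f (x(v := y)) \<partial>Kc v x)"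
    using Cons.IH Cons.prems by simp
  also have "\<dots> = (\<integral>\<^sup>+ y. indicator Q x * itf Kc vs f (x(v := y)) \<partial>Kc v x)"
  proof (rule nn_integral_cong)
    fix y have "(x(v := y) \<in> Q) = (x \<in> Q)" by (rule Cons.prems) simp
    then show "indicator Q (x(v := y)) * itf Kc vs f (x(v := y)) = indicator Q x * itf Kc vs f (x(v := y))"
      by (simp add: indicator_def)
  qed
  also have "\<dots> = indicator Q x * itf Kc (v # vs) f x"
    by (cases "x \<in> Q") auto
  finally show ?case .
qed

lemma coord_subalg:
  assumes "sets P = sets (PiM I M)" "Z \<subseteq> I"
  shows "subalgebra P (coord_algebra P M Z)"
proof -
  have sp: "space P = space (PiM I M)" using assms(1) by (rule sets_eq_imp_space_eq)
  have m: "(\<lambda>x. restrict x Z) \<in> P \<rightarrow>\<^sub>M PiM Z M"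
    using measurable_restrict_subset[OF assms(2), of M] by (simp add: measurable_cong_sets[OF assms(1) refl])
  have mz: "(\<lambda>x. restrict x Z) \<in> space P \<rightarrow> space (PiM Z M)"
    using measurable_space[OF m] by auto
  show ?thesis unfolding subalgebra_def coord_algebra_def
    using m mz by (auto simp: sets_vimage_algebra2 intro: measurable_sets)
qed

lemma coord_subalg2:
  assumes "sets P = sets (PiM I M)" "Z \<subseteq> Y" "Y \<subseteq> I"
  shows "subalgebra (coord_algebra P M Y) (coord_algebra P M Z)"
proof -
  have sp: "space P = space (PiM I M)" using assms(1) by (rule sets_eq_imp_space_eq)
  have m: "(\<lambda>x. restrict x Y) \<in> space P \<rightarrow> space (PiM Y M)"
    using sp assms by (auto simp: space_PiM PiE_iff)
  have mz: "(\<lambda>x. restrict x Z) \<in> space P \<rightarrow> space (PiM Z M)"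
    using sp assms by (auto simp: space_PiM PiE_iff)
  have "sets (coord_algebra P M Z) \<subseteq> sets (coord_algebra P M Y)"
  proof
    fix A assume "A \<in> sets (coord_algebra P M Z)"
    then obtain D where D: "D \<in> sets (PiM Z M)" and A: "A = (\<lambda>x. restrict x Z) -` D \<inter> space P"
      using mz by (auto simp: coord_algebra_def sets_vimage_algebra2)
    let ?D' = "(\<lambda>z. restrict z Z) -` D \<inter> space (PiM Y M)"
    have "?D' \<in> sets (PiM Y M)"
      using measurable_sets[OF measurable_restrict_subset[OF assms(2)] D] .
    moreover have "A = (\<lambda>x. restrict x Y) -` ?D' \<inter> space P"
      using A m assms(2) by (auto simp: Int_absorb1)
    ultimately show "A \<in> sets (coord_algebra P M Y)"
      unfolding coord_algebra_def using m sets_vimage_algebra2[OF m] by blast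
  qed
  then show ?thesis unfolding subalgebra_def coord_algebra_def by simp
qed

lemma coord_meas:
  assumes "sets P = sets (PiM I M)" "Z \<subseteq> I" "h \<in> borel_measurable (PiM Z M)"
  shows "(\<lambda>x. h (restrict x Z)) \<in> borel_measurable (coord_algebra P M Z)"
proof -
  have sp: "space P = space (PiM I M)" using assms(1) by (rule sets_eq_imp_space_eq)
  have mz: "(\<lambda>x. restrict x Z) \<in> space P \<rightarrow> space (PiM Z M)"
    using sp assms by (auto simp: space_PiM PiE_iff)
  show ?thesis unfolding coord_algebra_def
    by (rule measurable_compose[OF measurable_vimage_algebra1[OF mz] assms(3)])
qed

lemma coord_set:
  assumes "sets P = sets (PiM I M)" "Z \<subseteq> I" "T \<in> sets (PiM Z M)"
  shows "{x \<in> space P. restrict x Z \<in> T} \<in> sets (coord_algebra P M Z)"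
proof -
  have "{x \<in> space P. restrict x Z \<in> T} = (\<lambda>x. restrict x Z) -` T \<inter> space P" by auto
  then show ?thesis unfolding coord_algebra_def using in_vimage_algebra[OF assms(3)] by simp
qed

lemma nn_to_real:
  assumes "prob_space P" "f \<in> borel_measurable P" "\<And>x. x \<in> space P \<Longrightarrow> 0 \<le> f x \<and> f x \<le> 1"
  shows "(\<integral>\<^sup>+x. ennreal (f x) \<partial>P) = ennreal (\<integral>x. f x \<partial>P)"
proof -
  interpret prob_space P by fact
  have "integrable P f"
    by (rule integrable_const_bound[where B=1]) (use assms in auto)
  then show ?thesis using assms by (intro nn_integral_eq_integral) auto
qed


lemma fmsub: "prob_space P \<Longrightarrow> subalgebra P F \<Longrightarrow> finite_measure_subalgebra P F"
  unfolding finite_measure_subalgebra_def finite_measure_subalgebra_axioms_def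
  using prob_space.finite_measure by blast

lemma set_int_ind: "(\<integral>x\<in>A. (f x :: real) \<partial>P) = (\<integral>x. indicator A x * f x \<partial>P)"
  unfolding set_lebesgue_integral_def by simp

lemma CI_to_KID:
  assumes P: "prob_space P" and sP: "sets P = sets (PiM I M)" and w: "w \<in> I"
    and ZY: "Z \<subseteq> Y" and YI: "Y \<subseteq> I"
    and ci: "cond_indep P M {w} Y Z" and rcd: "is_rcd P M w Z k"
    and T: "T \<in> sets (PiM Y M)" and B: "B \<in> sets (M w)"
  shows "emeasure P {x \<in> space P. x w \<in> B \<and> restrict x Y \<in> T}
       = (\<integral>\<^sup>+x. indicator T (restrict x Y) * emeasure (k (restrict x Z)) B \<partial>P)"
proof -
  interpret prob_space P by fact
  define F where "F = coord_algebra P M Z"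
  have ZI: "Z \<subseteq> I" using ZY YI by auto
  have subF: "subalgebra P F" unfolding F_def by (rule coord_subalg[OF sP ZI])
  interpret F: finite_measure_subalgebra P F by (rule fmsub[OF P subF])
  have sp: "space P = space (PiM I M)" using sP by (rule sets_eq_imp_space_eq)
  have kmeas: "k \<in> PiM Z M \<rightarrow>\<^sub>M prob_algebra (M w)" using rcd by (simp add: is_rcd_def)
  define h where "h z = measure (k z) B" for z
  have hm: "h \<in> borel_measurable (PiM Z M)" unfolding h_def
    by (rule measurable_compose[OF kmeas measurable_measure_prob_algebra[OF B]])
  define g where "g x = h (restrict x Z)" for x
  have gF: "g \<in> borel_measurable F" unfolding g_def F_def by (rule coord_meas[OF sP ZI hm])
  have gP[measurable]: "g \<in> borel_measurable P" by (rule measurable_from_subalg[OF subF gF])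
  have rZ: "restrict x Z \<in> space (PiM Z M)" if "x \<in> space P" for x
    using that sp ZI by (auto simp: space_PiM PiE_iff)
  have kx: "prob_space (k (restrict x Z))" "sets (k (restrict x Z)) = sets (M w)" if "x \<in> space P" for x
    using measurable_space[OF kmeas rZ[OF that]] by (auto simp: space_prob_algebra)
  have ek: "emeasure (k (restrict x Z)) B = ennreal (g x)" if "x \<in> space P" for x
    using finite_measure.emeasure_eq_measure[OF prob_space.finite_measure[OF kx(1)[OF that]]] by (simp add: g_def h_def)
  have g01: "0 \<le> g x \<and> g x \<le> 1" if "x \<in> space P" for x
    unfolding g_def h_def using prob_space.prob_le_1[OF kx(1)[OF that]] by auto
  define SX where "SX = {x \<in> space P. x w \<in> B}"
  define TY where "TY = {x \<in> space P. restrict x Y \<in> T}"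
  have SXs[measurable]: "SX \<in> sets P"
  proof -
    have "SX = (\<lambda>x. x w) -` B \<inter> space P" unfolding SX_def by auto
    moreover have "(\<lambda>x. x w) \<in> P \<rightarrow>\<^sub>M M w"
      using measurable_component_singleton[OF w, of M] by (simp add: measurable_cong_sets[OF sP refl])
    ultimately show ?thesis using B by (auto intro: measurable_sets)
  qed
  have TYG: "TY \<in> sets (coord_algebra P M Y)" unfolding TY_def by (rule coord_set[OF sP YI T])
  have TYs[measurable]: "TY \<in> sets P" using coord_subalg[OF sP YI] TYG by (auto simp: subalgebra_def)
  define S where "S = {z \<in> space (PiM {w} M). z w \<in> B}"
  have S: "S \<in> sets (PiM {w} M)"
  proof -
    have "S = (\<lambda>z. z w) -` B \<inter> space (PiM {w} M)" unfolding S_def by auto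
    then show ?thesis using measurable_sets[OF measurable_component_singleton[of w "{w}" M] B] by simp
  qed
  have SXe: "{x \<in> space P. restrict x {w} \<in> S} = SX"
    unfolding SX_def S_def using sp w by (auto simp: space_PiM PiE_iff)
  have ci1: "AE x in P. real_cond_exp P F (indicator (SX \<inter> TY)) x
      = real_cond_exp P F (indicator SX) x * real_cond_exp P F (indicator TY) x"
  proof -
    have "AE x in P. real_cond_exp P F (indicator ({x \<in> space P. restrict x {w} \<in> S} \<inter> {x \<in> space P. restrict x Y \<in> T})) x
      = real_cond_exp P F (indicator {x \<in> space P. restrict x {w} \<in> S}) x * real_cond_exp P F (indicator {x \<in> space P. restrict x Y \<in> T}) x"
      using ci S T unfolding cond_indep_def Let_def F_def by blast
    then show ?thesis unfolding SXe TY_def .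
  qed
  have intg: "integrable P (\<lambda>x. indicator A x * g x)" if "A \<in> sets P" for A
    by (rule integrable_const_bound[where B=1]) (use g01 that in \<open>auto simp: indicator_def\<close>)
  have step1: "AE x in P. real_cond_exp P F (indicator SX) x = g x"
  proof (rule F.real_cond_exp_charact)
    fix A assume A: "A \<in> sets F"
    then obtain D where D: "D \<in> sets (PiM Z M)" and AD: "A = (\<lambda>x. restrict x Z) -` D \<inter> space P"
      using rZ by (auto simp: F_def coord_algebra_def sets_vimage_algebra2)
    have As: "A \<in> sets P" using A subF by (auto simp: subalgebra_def)
    have "emeasure P {x \<in> space P. x w \<in> B \<and> restrict x Z \<in> D}
        = (\<integral>\<^sup>+ x. indicator D (restrict x Z) * emeasure (k (restrict x Z)) B \<partial>P)"
      using rcd B D by (simp add: is_rcd_def)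
    also have "\<dots> = (\<integral>\<^sup>+ x. ennreal (indicator A x * g x) \<partial>P)"
      by (rule nn_integral_cong) (auto simp: AD ek indicator_def)
    also have "\<dots> = ennreal (\<integral>x. indicator A x * g x \<partial>P)"
      by (rule nn_to_real[OF P]) (use g01 As in \<open>auto simp: indicator_def\<close>)
    finally have e1: "emeasure P (A \<inter> SX) = ennreal (\<integral>x. indicator A x * g x \<partial>P)"
      by (simp add: AD SX_def Int_def conj_commute conj_left_commute)
    have "(\<integral>x\<in>A. indicator SX x \<partial>P) = measure P (A \<inter> SX)"
      unfolding set_int_ind using As SXs by (simp add: indicator_inter_arith[symmetric])
    also have "\<dots> = (\<integral>x. indicator A x * g x \<partial>P)"
      using e1 unfolding emeasure_eq_measure
      by (subst (asm) ennreal_inj) (auto intro!: integral_nonneg_AE simp: g01 indicator_def)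
    finally show "(\<integral>x\<in>A. indicator SX x \<partial>P) = (\<integral>x\<in>A. g x \<partial>P)"
      unfolding set_int_ind .
  next
    show "integrable P (indicator SX :: _ \<Rightarrow> real)" using SXs by (intro integrable_const_bound[where B=1]) auto
    show "integrable P g" by (rule integrable_const_bound[where B=1]) (use g01 in auto)
  qed (rule gF)
  have cem: "real_cond_exp P F f \<in> borel_measurable P" for f
    by (rule measurable_from_subalg[OF subF borel_measurable_cond_exp])
  have iTY: "integrable P (indicator TY :: _ \<Rightarrow> real)" using TYs by (intro integrable_const_bound[where B=1]) auto
  have iST: "integrable P (indicator (SX \<inter> TY) :: _ \<Rightarrow> real)" using TYs SXs by (intro integrable_const_bound[where B=1]) auto
  have "measure P (SX \<inter> TY) = (\<integral>x. indicator (SX \<inter> TY) x \<partial>P)" using SXs TYs by simp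
  also have "\<dots> = (\<integral>x. real_cond_exp P F (indicator (SX \<inter> TY)) x \<partial>P)"
    using F.real_cond_exp_int(2)[OF iST] by simp
  also have "\<dots> = (\<integral>x. real_cond_exp P F (indicator SX) x * real_cond_exp P F (indicator TY) x \<partial>P)"
    by (rule integral_cong_AE) (use ci1 cem in auto)
  also have "\<dots> = (\<integral>x. g x * real_cond_exp P F (indicator TY) x \<partial>P)"
    by (rule integral_cong_AE) (use step1 cem in auto)
  also have "\<dots> = (\<integral>x. g x * indicator TY x \<partial>P)"
  proof (rule F.real_cond_exp_intg(2))
    show "integrable P (\<lambda>x. g x * indicator TY x)"
      using intg[OF TYs] by (simp add: mult.commute)
  qed (use gF TYs in auto)
  finally have m1: "measure P (SX \<inter> TY) = (\<integral>x. g x * indicator TY x \<partial>P)" .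
  have "emeasure P {x \<in> space P. x w \<in> B \<and> restrict x Y \<in> T} = emeasure P (SX \<inter> TY)"
    unfolding SX_def TY_def by (rule arg_cong[where f="emeasure P"]) auto
  also have "\<dots> = ennreal (\<integral>x. g x * indicator TY x \<partial>P)"
    using m1 emeasure_eq_measure by simp
  also have "\<dots> = (\<integral>\<^sup>+x. ennreal (g x * indicator TY x) \<partial>P)"
    by (rule nn_to_real[OF P, symmetric]) (use g01 TYs in \<open>auto simp: indicator_def\<close>)
  also have "\<dots> = (\<integral>\<^sup>+x. indicator T (restrict x Y) * emeasure (k (restrict x Z)) B \<partial>P)"
    by (rule nn_integral_cong) (auto simp: ek TY_def indicator_def)
  finally show ?thesis .
qed


lemma KID_to_CI:
  assumes P: "prob_space P" and sP: "sets P = sets (PiM I M)" and w: "w \<in> I"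
    and ZY: "Z \<subseteq> Y" and YI: "Y \<subseteq> I"
    and kmeas: "k \<in> PiM Z M \<rightarrow>\<^sub>M prob_algebra (M w)"
    and kid: "\<And>T B. T \<in> sets (PiM Y M) \<Longrightarrow> B \<in> sets (M w) \<Longrightarrow>
        emeasure P {x \<in> space P. x w \<in> B \<and> restrict x Y \<in> T}
       = (\<integral>\<^sup>+x. indicator T (restrict x Y) * emeasure (k (restrict x Z)) B \<partial>P)"
  shows "cond_indep P M {w} Y Z"
  unfolding cond_indep_def Let_def
proof (intro ballI)
  fix S T assume S: "S \<in> sets (PiM {w} M)" and T: "T \<in> sets (PiM Y M)"
  interpret prob_space P by fact
  define F where "F = coord_algebra P M Z"
  define G where "G = coord_algebra P M Y"
  have ZI: "Z \<subseteq> I" using ZY YI by auto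
  have subF: "subalgebra P F" unfolding F_def by (rule coord_subalg[OF sP ZI])
  have subG: "subalgebra P G" unfolding G_def by (rule coord_subalg[OF sP YI])
  have subGF: "subalgebra G F" unfolding G_def F_def by (rule coord_subalg2[OF sP ZY YI])
  interpret F: finite_measure_subalgebra P F by (rule fmsub[OF P subF])
  interpret G: finite_measure_subalgebra P G by (rule fmsub[OF P subG])
  have sp: "space P = space (PiM I M)" using sP by (rule sets_eq_imp_space_eq)
  define B where "B = {y \<in> space (M w). (\<lambda>u\<in>{w}. y) \<in> S}"
  have B: "B \<in> sets (M w)"
  proof -
    have m: "(\<lambda>y. \<lambda>u\<in>{w}. y) \<in> M w \<rightarrow>\<^sub>M PiM {w} M"
      by (rule measurable_restrict) auto
    have "B = (\<lambda>y. \<lambda>u\<in>{w}. y) -` S \<inter> space (M w)" unfolding B_def by auto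
    then show ?thesis using measurable_sets[OF m S] by simp
  qed
  define SX where "SX = {x \<in> space P. x w \<in> B}"
  have SXe: "{x \<in> space P. restrict x {w} \<in> S} = SX"
  proof -
    have "restrict x {w} = (\<lambda>u\<in>{w}. x w)" for x :: "'a \<Rightarrow> 'b" by (auto simp: restrict_def)
    then show ?thesis unfolding SX_def B_def using sp w by (auto simp: space_PiM PiE_iff)
  qed
  define TY where "TY = {x \<in> space P. restrict x Y \<in> T}"
  have SXs[measurable]: "SX \<in> sets P"
  proof -
    have "SX = (\<lambda>x. x w) -` B \<inter> space P" unfolding SX_def by auto
    moreover have "(\<lambda>x. x w) \<in> P \<rightarrow>\<^sub>M M w"
      using measurable_component_singleton[OF w, of M] by (simp add: measurable_cong_sets[OF sP refl])
    ultimately show ?thesis using B by (auto intro: measurable_sets)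
  qed
  have TYG: "TY \<in> sets G" unfolding TY_def G_def by (rule coord_set[OF sP YI T])
  have TYs[measurable]: "TY \<in> sets P" using subG TYG by (auto simp: subalgebra_def)
  define h where "h z = measure (k z) B" for z
  have hm: "h \<in> borel_measurable (PiM Z M)" unfolding h_def
    by (rule measurable_compose[OF kmeas measurable_measure_prob_algebra[OF B]])
  define g where "g x = h (restrict x Z)" for x
  have gF: "g \<in> borel_measurable F" unfolding g_def F_def by (rule coord_meas[OF sP ZI hm])
  have gG: "g \<in> borel_measurable G" by (rule measurable_from_subalg[OF subGF gF])
  have gP[measurable]: "g \<in> borel_measurable P" by (rule measurable_from_subalg[OF subF gF])
  have rZ: "restrict x Z \<in> space (PiM Z M)" if "x \<in> space P" for x
    using that sp ZI by (auto simp: space_PiM PiE_iff)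
  have kx: "prob_space (k (restrict x Z))" "sets (k (restrict x Z)) = sets (M w)" if "x \<in> space P" for x
    using measurable_space[OF kmeas rZ[OF that]] by (auto simp: space_prob_algebra)
  have ek: "emeasure (k (restrict x Z)) B = ennreal (g x)" if "x \<in> space P" for x
    using finite_measure.emeasure_eq_measure[OF prob_space.finite_measure[OF kx(1)[OF that]]] by (simp add: g_def h_def)
  have g01: "0 \<le> g x \<and> g x \<le> 1" if "x \<in> space P" for x
    unfolding g_def h_def using prob_space.prob_le_1[OF kx(1)[OF that]] by auto
  have intg: "integrable P (\<lambda>x. indicator A x * g x)" if "A \<in> sets P" for A
    by (rule integrable_const_bound[where B=1]) (use g01 that in \<open>auto simp: indicator_def\<close>)
  have ig: "integrable P g" by (rule integrable_const_bound[where B=1]) (use g01 in auto)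
  have iSX: "integrable P (indicator SX :: _ \<Rightarrow> real)" using SXs by (intro integrable_const_bound[where B=1]) auto
  have iTY: "integrable P (indicator TY :: _ \<Rightarrow> real)" using TYs by (intro integrable_const_bound[where B=1]) auto
  have iST: "integrable P (indicator (SX \<inter> TY) :: _ \<Rightarrow> real)" using TYs SXs by (intro integrable_const_bound[where B=1]) auto
  have stepA: "AE x in P. real_cond_exp P G (indicator SX) x = g x"
  proof (rule G.real_cond_exp_charact)
    fix A assume A: "A \<in> sets G"
    have rY: "(\<lambda>x. restrict x Y) \<in> space P \<rightarrow> space (PiM Y M)"
      using sp YI by (auto simp: space_PiM PiE_iff)
    obtain D where D: "D \<in> sets (PiM Y M)" and AD: "A = (\<lambda>x. restrict x Y) -` D \<inter> space P"
      using A rY by (auto simp: G_def coord_algebra_def sets_vimage_algebra2)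
    have As: "A \<in> sets P" using A subG by (auto simp: subalgebra_def)
    have "emeasure P {x \<in> space P. x w \<in> B \<and> restrict x Y \<in> D}
        = (\<integral>\<^sup>+ x. indicator D (restrict x Y) * emeasure (k (restrict x Z)) B \<partial>P)"
      by (rule kid[OF D B])
    also have "\<dots> = (\<integral>\<^sup>+ x. ennreal (indicator A x * g x) \<partial>P)"
      by (rule nn_integral_cong) (auto simp: AD ek indicator_def)
    also have "\<dots> = ennreal (\<integral>x. indicator A x * g x \<partial>P)"
      by (rule nn_to_real[OF P]) (use g01 As in \<open>auto simp: indicator_def\<close>)
    finally have e1: "emeasure P (A \<inter> SX) = ennreal (\<integral>x. indicator A x * g x \<partial>P)"
      by (simp add: AD SX_def Int_def conj_commute conj_left_commute)
    have "(\<integral>x\<in>A. indicator SX x \<partial>P) = measure P (A \<inter> SX)"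
      unfolding set_int_ind using As SXs by (simp add: indicator_inter_arith[symmetric])
    also have "\<dots> = (\<integral>x. indicator A x * g x \<partial>P)"
      using e1 unfolding emeasure_eq_measure
      by (subst (asm) ennreal_inj) (auto intro!: integral_nonneg_AE simp: g01 indicator_def)
    finally show "(\<integral>x\<in>A. indicator SX x \<partial>P) = (\<integral>x\<in>A. g x \<partial>P)"
      unfolding set_int_ind .
  qed (use iSX ig gG in auto)
  have cemF: "real_cond_exp P F f \<in> borel_measurable P" for f
    by (rule measurable_from_subalg[OF subF borel_measurable_cond_exp])
  have cemG: "real_cond_exp P G f \<in> borel_measurable P" for f
    by (rule measurable_from_subalg[OF subG borel_measurable_cond_exp])
  have indTYG: "indicator TY \<in> borel_measurable G" using TYG by simp
  have e1: "AE x in P. real_cond_exp P F (real_cond_exp P G (indicator (SX \<inter> TY))) x = real_cond_exp P F (indicator (SX \<inter> TY)) x"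
    by (rule F.real_cond_exp_nested_subalg[OF subG subGF iST])
  have e2: "AE x in P. real_cond_exp P G (indicator (SX \<inter> TY)) x = indicator TY x * real_cond_exp P G (indicator SX) x"
  proof -
    have "indicator (SX \<inter> TY) = (\<lambda>x. indicator TY x * indicator SX x :: real)"
      by (auto simp: indicator_def)
    moreover have "AE x in P. real_cond_exp P G (\<lambda>x. indicator TY x * indicator SX x) x = indicator TY x * real_cond_exp P G (indicator SX) x"
      by (rule G.real_cond_exp_mult) (use indTYG SXs iST in \<open>auto simp: indicator_inter_arith[symmetric] Int_commute\<close>)
    ultimately show ?thesis by simp
  qed
  have e3: "AE x in P. real_cond_exp P F (real_cond_exp P G (indicator (SX \<inter> TY))) x = real_cond_exp P F (\<lambda>x. g x * indicator TY x) x"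
  proof (rule F.real_cond_exp_cong)
    show "AE x in P. real_cond_exp P G (indicator (SX \<inter> TY)) x = g x * indicator TY x"
      using e2 stepA by eventually_elim (simp add: mult.commute)
  qed (use cemG in auto)
  have e4: "AE x in P. real_cond_exp P F (\<lambda>x. g x * indicator TY x) x = g x * real_cond_exp P F (indicator TY) x"
    by (rule F.real_cond_exp_mult) (use gF intg[OF TYs] in \<open>auto simp: mult.commute\<close>)
  have e5: "AE x in P. real_cond_exp P F (real_cond_exp P G (indicator SX)) x = real_cond_exp P F (indicator SX) x"
    by (rule F.real_cond_exp_nested_subalg[OF subG subGF iSX])
  have e6: "AE x in P. real_cond_exp P F (real_cond_exp P G (indicator SX)) x = real_cond_exp P F g x"
    by (rule F.real_cond_exp_cong) (use stepA cemG in auto)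
  have e7: "AE x in P. real_cond_exp P F g x = g x"
    by (rule F.real_cond_exp_F_meas[OF ig gF])
  have "AE x in P. real_cond_exp P F (indicator (SX \<inter> TY)) x
      = real_cond_exp P F (indicator SX) x * real_cond_exp P F (indicator TY) x"
    using e1 e3 e4 e5 e6 e7 by eventually_elim simp
  then show "AE x in P. real_cond_exp P (coord_algebra P M Z) (indicator ({x \<in> space P. restrict x {w} \<in> S} \<inter> {x \<in> space P. restrict x Y \<in> T})) x
      = real_cond_exp P (coord_algebra P M Z) (indicator {x \<in> space P. restrict x {w} \<in> S}) x *
        real_cond_exp P (coord_algebra P M Z) (indicator {x \<in> space P. restrict x Y \<in> T}) x"
    unfolding SXe TY_def[symmetric] F_def[symmetric] .
qed

lemma dpath_Cons2: "dpath G (a # b # xs) = ((a, b) \<in> edges G \<and> dpath G (b # xs))"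
  by (simp add: dpath_def)

lemma dpath_tail: "dpath G (a # xs) \<Longrightarrow> dpath G xs"
  by (cases xs) (auto simp: dpath_def)

lemma dpath_rt: "dpath G xs \<Longrightarrow> u \<in> set xs \<Longrightarrow> (u, last xs) \<in> (edges G)\<^sup>*"
proof (induction xs arbitrary: u)
  case Nil then show ?case by simp
next
  case (Cons a xs)
  show ?case
  proof (cases xs)
    case Nil then show ?thesis using Cons by simp
  next
    case (Cons b ys)
    have d: "dpath G xs" using Cons.prems(1) by (rule dpath_tail)
    have ab: "(a, b) \<in> edges G" using Cons.prems(1) \<open>xs = b # ys\<close> by (simp add: dpath_Cons2)
    have "(b, last xs) \<in> (edges G)\<^sup>*" using Cons.IH[OF d, of b] \<open>xs = b # ys\<close> by simp
    then have "(a, last xs) \<in> (edges G)\<^sup>*" by (rule converse_rtrancl_into_rtrancl[OF ab])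
    then show ?thesis using Cons.prems Cons.IH[OF d] \<open>xs = b # ys\<close> by auto
  qed
qed

lemma dpath_induced: "set xs \<subseteq> A \<Longrightarrow> dpath (induced G A) xs = dpath G xs"
proof (induction xs)
  case Nil then show ?case by (simp add: dpath_def)
next
  case (Cons a xs)
  then show ?case
    by (cases xs) (auto simp: dpath_def induced_def)
qed

lemma anc_path:
  assumes "ancestral G A" "dpath G xs" "xs \<noteq> []" "last xs \<in> A"
  shows "set xs \<subseteq> A"
  using assms dpath_rt[OF assms(2)] unfolding ancestral_def by blast

lemma graph_comm:
  assumes anc: "ancestral G A" and hg: "is_hedg G"
  shows "marg (induced G A) (A \<inter> U) = induced (marg G U) (A - U)"
proof -
  have AV: "A \<subseteq> nodes G" using anc by (simp add: ancestral_def)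
  have e: "edges (marg (induced G A) (A \<inter> U)) = edges (induced (marg G U) (A - U))"
  proof (rule set_eqI, rule iffI)
    fix e assume "e \<in> edges (marg (induced G A) (A \<inter> U))"
    then obtain v1 v2 us where e: "e = (v1, v2)" "v1 \<in> A - U" "v2 \<in> A - U" "set us \<subseteq> A \<inter> U"
       "dpath (induced G A) (v1 # us @ [v2])"
      by (auto simp: marg_def induced_def)
    then have "dpath G (v1 # us @ [v2])" by (subst (asm) dpath_induced) auto
    then show "e \<in> edges (induced (marg G U) (A - U))"
      using e AV by (auto simp: marg_def induced_def)
  next
    fix e assume "e \<in> edges (induced (marg G U) (A - U))"
    then obtain v1 v2 us where e: "e = (v1, v2)" "v1 \<in> A - U" "v2 \<in> A - U" "set us \<subseteq> U"
       "dpath G (v1 # us @ [v2])"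
      by (auto simp: marg_def induced_def)
    have "set (v1 # us @ [v2]) \<subseteq> A" by (rule anc_path[OF anc e(5)]) (use e in auto)
    then have "dpath (induced G A) (v1 # us @ [v2])" using e(5) by (subst dpath_induced) auto
    then show "e \<in> edges (marg (induced G A) (A \<inter> U))"
      using e \<open>set (v1 # us @ [v2]) \<subseteq> A\<close> by (auto simp: marg_def induced_def)
  qed
  have h: "hyper (marg (induced G A) (A \<inter> U)) = hyper (induced (marg G U) (A - U))"
  proof (rule set_eqI, rule iffI)
    fix F' assume "F' \<in> hyper (marg (induced G A) (A \<inter> U))"
    then obtain F where F': "F' \<subseteq> A - U" and F: "F \<in> hyper G" "F \<subseteq> A" "F \<subseteq> F' \<union> (A \<inter> U)"
      and pv: "\<forall>v\<in>F'. v \<in> F - (A \<inter> U) \<or> (\<exists>us. us \<noteq> [] \<and> set us \<subseteq> A \<inter> U \<and> hd us \<in> F \<and> dpath (induced G A) (us @ [v]))"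
      by (auto simp: marg_def induced_def)
    have "\<forall>v\<in>F'. v \<in> F - U \<or> (\<exists>us. us \<noteq> [] \<and> set us \<subseteq> U \<and> hd us \<in> F \<and> dpath G (us @ [v]))"
    proof
      fix v assume v: "v \<in> F'"
      have "v \<in> F - (A \<inter> U) \<or> (\<exists>us. us \<noteq> [] \<and> set us \<subseteq> A \<inter> U \<and> hd us \<in> F \<and> dpath (induced G A) (us @ [v]))"
        using pv v by blast
      then show "v \<in> F - U \<or> (\<exists>us. us \<noteq> [] \<and> set us \<subseteq> U \<and> hd us \<in> F \<and> dpath G (us @ [v]))"
      proof
        assume "v \<in> F - (A \<inter> U)" then show ?thesis using F(2) by auto
      next
        assume "\<exists>us. us \<noteq> [] \<and> set us \<subseteq> A \<inter> U \<and> hd us \<in> F \<and> dpath (induced G A) (us @ [v])"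
        then obtain us where us: "us \<noteq> []" "set us \<subseteq> A \<inter> U" "hd us \<in> F" "dpath (induced G A) (us @ [v])" by blast
        then have "dpath G (us @ [v])" using v F' by (subst (asm) dpath_induced) auto
        then show ?thesis using us by auto
      qed
    qed
    then have "\<exists>F\<in>hyper G. F \<subseteq> F' \<union> U \<and> (\<forall>v\<in>F'. v \<in> F - U \<or> (\<exists>us. us \<noteq> [] \<and> set us \<subseteq> U \<and> hd us \<in> F \<and> dpath G (us @ [v])))"
      using F by blast
    moreover have "F' \<subseteq> nodes G - U" "F' \<subseteq> A - U" using F' AV by auto
    ultimately show "F' \<in> hyper (induced (marg G U) (A - U))"
      unfolding marg_def induced_def hedg.simps mem_Collect_eq by blast
  next
    fix F' assume "F' \<in> hyper (induced (marg G U) (A - U))"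
    then obtain F where F': "F' \<subseteq> A - U" "F' \<subseteq> nodes G - U" and F: "F \<in> hyper G" "F \<subseteq> F' \<union> U"
      and pv: "\<forall>v\<in>F'. v \<in> F - U \<or> (\<exists>us. us \<noteq> [] \<and> set us \<subseteq> U \<and> hd us \<in> F \<and> dpath G (us @ [v]))"
      by (auto simp: marg_def induced_def)
    define F2 where "F2 = F \<inter> A"
    have cl: "\<forall>F\<in>hyper G. \<forall>F'. F' \<subseteq> F \<longrightarrow> F' \<in> hyper G" using hg unfolding is_hedg_def by blast
    have F2: "F2 \<in> hyper G" unfolding F2_def by (rule cl[rule_format, OF F(1)]) auto
    have "\<forall>v\<in>F'. v \<in> F2 - (A \<inter> U) \<or> (\<exists>us. us \<noteq> [] \<and> set us \<subseteq> A \<inter> U \<and> hd us \<in> F2 \<and> dpath (induced G A) (us @ [v]))"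
    proof
      fix v assume v: "v \<in> F'"
      have "v \<in> F - U \<or> (\<exists>us. us \<noteq> [] \<and> set us \<subseteq> U \<and> hd us \<in> F \<and> dpath G (us @ [v]))"
        using pv v by blast
      then show "v \<in> F2 - (A \<inter> U) \<or> (\<exists>us. us \<noteq> [] \<and> set us \<subseteq> A \<inter> U \<and> hd us \<in> F2 \<and> dpath (induced G A) (us @ [v]))"
      proof
        assume "v \<in> F - U" then show ?thesis using F' v by (auto simp: F2_def)
      next
        assume "\<exists>us. us \<noteq> [] \<and> set us \<subseteq> U \<and> hd us \<in> F \<and> dpath G (us @ [v])"
        then obtain us where us: "us \<noteq> []" "set us \<subseteq> U" "hd us \<in> F" "dpath G (us @ [v])" by blast
        have sA: "set (us @ [v]) \<subseteq> A" by (rule anc_path[OF anc us(4)]) (use v F' in auto)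
        then have "dpath (induced G A) (us @ [v])" using us(4) by (subst dpath_induced) auto
        moreover have "hd us \<in> A" using sA us(1) by (cases us) auto
        ultimately show ?thesis using us sA by (auto simp: F2_def)
      qed
    qed
    moreover have "F2 \<subseteq> F' \<union> (A \<inter> U)" using F by (auto simp: F2_def)
    moreover have "F2 \<in> hyper (induced G A)" using F2 by (simp add: induced_def F2_def)
    moreover have "F' \<subseteq> nodes (induced G A) - A \<inter> U" using F' by (auto simp: induced_def)
    ultimately show "F' \<in> hyper (marg (induced G A) (A \<inter> U))"
      unfolding marg_def hedg.simps mem_Collect_eq by blast
  qed
  show ?thesis
  proof (rule hedg.equality)
    show "nodes (marg (induced G A) (A \<inter> U)) = nodes (induced (marg G U) (A - U))"
      by (auto simp: marg_def induced_def)
  qed (use e h in \<open>simp_all add: marg_def induced_def\<close>)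
qed

lemma slo_props:
  assumes "strict_linear_order_on V r"
  shows "trans r" "irrefl r" "\<And>a b. a \<in> V \<Longrightarrow> b \<in> V \<Longrightarrow> a \<noteq> b \<Longrightarrow> (a, b) \<in> r \<or> (b, a) \<in> r"
  using assms unfolding strict_linear_order_on_def total_on_def by auto

lemma slo_max:
  assumes "strict_linear_order_on V r" "finite A" "A \<noteq> {}" "A \<subseteq> V"
  shows "\<exists>m\<in>A. \<forall>a\<in>A. a \<noteq> m \<longrightarrow> (a, m) \<in> r"
  using assms(2,3,4)
proof (induction A rule: finite_ne_induct)
  case (singleton x) then show ?case by auto
next
  case (insert x F)
  then obtain m where m: "m \<in> F" "\<forall>a\<in>F. a \<noteq> m \<longrightarrow> (a, m) \<in> r" by auto
  note p = slo_props[OF assms(1)]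
  show ?case
  proof (cases "(m, x) \<in> r")
    case True
    then show ?thesis using m p(1) insert.hyps by (auto intro: transD[OF p(1)])
  next
    case False
    have "x \<noteq> m" using m insert.hyps by auto
    then have "(x, m) \<in> r" using p(3)[of x m] False insert.prems m by auto
    then show ?thesis using m by auto
  qed
qed

lemma sorted_ex:
  assumes "strict_linear_order_on V r" "finite A" "A \<subseteq> V"
  shows "\<exists>xs. set xs = A \<and> distinct xs \<and> sorted_wrt (\<lambda>a b. (a, b) \<in> r) xs"
  using assms(2,3)
proof (induction "card A" arbitrary: A)
  case 0
  then show ?case by auto
next
  case (Suc n)
  then have ne: "A \<noteq> {}" by auto
  obtain m where m: "m \<in> A" "\<forall>a\<in>A. a \<noteq> m \<longrightarrow> (a, m) \<in> r" using slo_max[OF assms(1) Suc.prems(1) ne Suc.prems(2)] by blast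
  have n: "n = card (A - {m})" using Suc.hyps(2) m(1) Suc.prems(1) by simp
  obtain xs where xs: "set xs = A - {m}" "distinct xs" "sorted_wrt (\<lambda>a b. (a, b) \<in> r) xs"
    using Suc.hyps(1)[OF n] Suc.prems by auto
  show ?case
    by (rule exI[of _ "xs @ [m]"]) (use xs m in \<open>auto simp: sorted_wrt_append\<close>)
qed

lemma sorted_nodes_props:
  assumes "strict_linear_order_on V r" "finite A" "A \<subseteq> V"
  shows "set (sorted_nodes r A) = A" "distinct (sorted_nodes r A)" "sorted_wrt (\<lambda>a b. (a, b) \<in> r) (sorted_nodes r A)"
  using someI_ex[OF sorted_ex[OF assms]] unfolding sorted_nodes_def by auto

lemma sorted_take:
  assumes "trans r" "irrefl r" "sorted_wrt (\<lambda>a b. (a, b) \<in> r) xs" "distinct xs" "i < length xs"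
  shows "set (take i xs) = {u \<in> set xs. (u, xs ! i) \<in> r}"
proof
  show "set (take i xs) \<subseteq> {u \<in> set xs. (u, xs ! i) \<in> r}"
  proof
    fix u assume "u \<in> set (take i xs)"
    then obtain j where j: "j < i" "u = xs ! j" using assms(5) by (auto simp: in_set_conv_nth)
    then show "u \<in> {u \<in> set xs. (u, xs ! i) \<in> r}"
      using assms(3,5) by (auto simp: sorted_wrt_iff_nth_less)
  qed
next
  show "{u \<in> set xs. (u, xs ! i) \<in> r} \<subseteq> set (take i xs)"
  proof
    fix u assume u: "u \<in> {u \<in> set xs. (u, xs ! i) \<in> r}"
    then obtain j where j: "j < length xs" "u = xs ! j" by (auto simp: in_set_conv_nth)
    have "j \<noteq> i" using u j assms(2) by (auto simp: irrefl_def)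
    moreover have "\<not> i < j"
    proof
      assume "i < j"
      then have "(xs ! i, xs ! j) \<in> r" using assms(3) j by (auto simp: sorted_wrt_iff_nth_less)
      then have "(xs ! i, xs ! i) \<in> r" using u j transD[OF assms(1)] by blast
      then show False using assms(2) by (auto simp: irrefl_def)
    qed
    ultimately have "j < i" by auto
    then show "u \<in> set (take i xs)" using j assms(5) by (auto simp: in_set_conv_nth)
  qed
qed

lemma anc_marg:
  assumes anc: "ancestral G A" and hg: "is_hedg G"
  shows "ancestral (marg G U) (A - U)"
  unfolding ancestral_def
proof (intro conjI allI impI)
  show "A - U \<subseteq> nodes (marg G U)" using anc by (auto simp: ancestral_def marg_def)
  fix w a assume a: "a \<in> A - U" and wa: "(w, a) \<in> (edges (marg G U))\<^sup>*"
  from wa a show "w \<in> A - U"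
  proof (induction rule: converse_rtrancl_induct)
    case base then show ?case .
  next
    case (step x y)
    then have yA: "y \<in> A - U" by auto
    from step(1) obtain us where xy: "x \<in> nodes G - U" "set us \<subseteq> U" "dpath G (x # us @ [y])"
      by (auto simp: marg_def)
    have "set (x # us @ [y]) \<subseteq> A" by (rule anc_path[OF anc xy(3)]) (use yA in auto)
    then show ?case using xy by auto
  qed
qed

lemma dpath_snoc: "dpath G (xs @ [z]) \<Longrightarrow> (z, y) \<in> edges G \<Longrightarrow> dpath G (xs @ [z, y])"
  unfolding dpath_def by (auto simp: successively_append_iff)

lemma anc_closure:
  assumes hg: "is_hedg G" and anc: "ancestral (marg G U) A"
  defines "Ah \<equiv> {x. \<exists>a\<in>A. (x, a) \<in> (edges G)\<^sup>*}"
  shows "ancestral G Ah" "Ah - U = A" "A \<subseteq> Ah"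
proof -
  have EV: "edges G \<subseteq> nodes G \<times> nodes G" using hg by (simp add: is_hedg_def)
  have AV: "A \<subseteq> nodes G - U" using anc by (auto simp: ancestral_def marg_def)
  have AhV: "Ah \<subseteq> nodes G"
  proof
    fix x assume "x \<in> Ah"
    then obtain a where a: "a \<in> A" "(x, a) \<in> (edges G)\<^sup>*" by (auto simp: Ah_def)
    from a(2) show "x \<in> nodes G"
    proof (cases rule: converse_rtranclE)
      case base then show ?thesis using a AV by auto
    next
      case (step y) then show ?thesis using EV by auto
    qed
  qed
  show "ancestral G Ah" unfolding ancestral_def
  proof (intro conjI allI impI)
    show "Ah \<subseteq> nodes G" by (rule AhV)
    fix w a assume "a \<in> Ah" "(w, a) \<in> (edges G)\<^sup>*"
    then show "w \<in> Ah" unfolding Ah_def by (blast intro: rtrancl_trans)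
  qed
  show "A \<subseteq> Ah" unfolding Ah_def by blast
  have key: "(y \<in> nodes G - U \<longrightarrow> y \<in> A) \<and>
     (\<forall>x us. x \<in> nodes G - U \<and> set us \<subseteq> U \<and> dpath G (x # us @ [y]) \<longrightarrow> x \<in> A)"
    if "(y, a) \<in> (edges G)\<^sup>*" "a \<in> A" for y a
    using that(1)
  proof (induction rule: converse_rtrancl_induct)
    case base
    have "\<forall>x us. x \<in> nodes G - U \<and> set us \<subseteq> U \<and> dpath G (x # us @ [a]) \<longrightarrow> x \<in> A"
    proof (intro allI impI)
      fix x us assume h: "x \<in> nodes G - U \<and> set us \<subseteq> U \<and> dpath G (x # us @ [a])"
      then have "(x, a) \<in> edges (marg G U)" using AV that(2) by (auto simp: marg_def)
      then show "x \<in> A" using anc that(2) unfolding ancestral_def by blast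
    qed
    then show ?case using that(2) by blast
  next
    case (step z y)
    have p1: "z \<in> A" if "z \<in> nodes G - U"
    proof -
      have "z \<in> nodes G - U \<and> set [] \<subseteq> U \<and> dpath G (z # [] @ [y])" using step.hyps(1) that by (simp add: dpath_def)
      then show "z \<in> A" by (rule conjunct2[OF step.IH, rule_format])
    qed
    have "\<forall>x us. x \<in> nodes G - U \<and> set us \<subseteq> U \<and> dpath G (x # us @ [z]) \<longrightarrow> x \<in> A"
    proof (intro allI impI)
      fix x us assume h: "x \<in> nodes G - U \<and> set us \<subseteq> U \<and> dpath G (x # us @ [z])"
      show "x \<in> A"
      proof (cases "z \<in> U")
        case True
        have "dpath G (x # (us @ [z]) @ [y])" using dpath_snoc[of G "x # us" z y] h step.hyps(1) by simp
        then have "x \<in> nodes G - U \<and> set (us @ [z]) \<subseteq> U \<and> dpath G (x # (us @ [z]) @ [y])" using h True by auto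
        then show ?thesis by (rule conjunct2[OF step.IH, rule_format])
      next
        case False
        have zV: "z \<in> nodes G" using step.hyps(1) EV by auto
        then have "z \<in> A" using p1 False by auto
        moreover have "(x, z) \<in> edges (marg G U)" using h False zV by (auto simp: marg_def)
        ultimately show ?thesis using anc unfolding ancestral_def by blast
      qed
    qed
    then show ?case using p1 by blast
  qed
  show "Ah - U = A"
  proof
    show "Ah - U \<subseteq> A"
    proof
      fix x assume "x \<in> Ah - U"
      then obtain a where "a \<in> A" "(x, a) \<in> (edges G)\<^sup>*" "x \<notin> U" by (auto simp: Ah_def)
      then show "x \<in> A" using key AhV \<open>x \<in> Ah - U\<close> by blast
    qed
    show "A \<subseteq> Ah - U" using AV \<open>A \<subseteq> Ah\<close> by auto
  qed
qed

lemma iter_itf: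
  assumes Kc: "\<And>u x. Kc u x = K u (Cs u) (restrict x (Cs u))"
  shows "distinct vs \<Longrightarrow> iter_int K Cs B vs x
     = itf Kc vs (indicator {z. \<forall>u\<in>set vs. z u \<in> B u}) x"
proof (induction vs arbitrary: x)
  case Nil
  then show ?case by simp
next
  case (Cons v vs)
  have eqf: "indicator {z. \<forall>u\<in>set (v # vs). z u \<in> B u} = (\<lambda>z. indicator {z. z v \<in> B v} z * indicator {z. \<forall>u\<in>set vs. z u \<in> B u} z :: ennreal)"
    by (auto simp: indicator_def fun_eq_iff)
  have "iter_int K Cs B (v # vs) x = (\<integral>\<^sup>+ y. indicator (B v) y * iter_int K Cs B vs (x(v := y)) \<partial>Kc v x)"
    by (simp only: iter_int.simps Kc)
  also have "\<dots> = (\<integral>\<^sup>+ y. indicator (B v) y * itf Kc vs (indicator {z. \<forall>u\<in>set vs. z u \<in> B u}) (x(v := y)) \<partial>Kc v x)"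
    using Cons by simp
  also have "\<dots> = (\<integral>\<^sup>+ y. itf Kc vs (\<lambda>z. indicator {z. z v \<in> B v} z * indicator {z. \<forall>u\<in>set vs. z u \<in> B u} z) (x(v := y)) \<partial>Kc v x)"
  proof (rule nn_integral_cong)
    fix y
    have "itf Kc vs (\<lambda>z. indicator {z. z v \<in> B v} z * indicator {z. \<forall>u\<in>set vs. z u \<in> B u} z) (x(v := y))
        = indicator {z. z v \<in> B v} (x(v := y)) * itf Kc vs (indicator {z. \<forall>u\<in>set vs. z u \<in> B u}) (x(v := y))"
      by (rule itf_pull) (use Cons.prems in auto)
    then show "indicator (B v) y * itf Kc vs (indicator {z. \<forall>u\<in>set vs. z u \<in> B u}) (x(v := y))
      = itf Kc vs (\<lambda>z. indicator {z. z v \<in> B v} z * indicator {z. \<forall>u\<in>set vs. z u \<in> B u} z) (x(v := y))"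
      by (simp add: indicator_def)
  qed
  also have "\<dots> = itf Kc (v # vs) (indicator {z. \<forall>u\<in>set (v # vs). z u \<in> B u}) x"
    unfolding eqf by simp
  finally show ?case .
qed

lemma goodk_append: "goodk Kc M J (p @ q) = (goodk Kc M J p \<and> goodk Kc M (J \<union> set p) q)"
  by (induction p arbitrary: J) auto

lemma goodk_distinct: "goodk Kc M J vs \<Longrightarrow> distinct vs \<and> set vs \<inter> J = {}"
  by (induction vs arbitrary: J) fastforce+

lemma goodk_intro:
  assumes "distinct vs" "set vs \<inter> J = {}"
    "\<And>i. i < length vs \<Longrightarrow> Cs (vs ! i) \<subseteq> J \<union> set (take i vs)"
    "\<And>u. u \<in> set vs \<Longrightarrow> K u (Cs u) \<in> PiM (Cs u) M \<rightarrow>\<^sub>M prob_algebra (M u)"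
  shows "goodk (\<lambda>u x. K u (Cs u) (restrict x (Cs u))) M J vs"
  using assms
proof (induction vs arbitrary: J)
  case Nil
  then show ?case by simp
next
  case (Cons v vs)
  have "Cs v \<subseteq> J" using Cons.prems(3)[of 0] by simp
  then have m: "(\<lambda>x. K v (Cs v) (restrict x (Cs v))) \<in> PiM J M \<rightarrow>\<^sub>M prob_algebra (M v)"
    by (intro measurable_compose[OF measurable_restrict_subset Cons.prems(4)[of v]]) auto
  have "goodk (\<lambda>u x. K u (Cs u) (restrict x (Cs u))) M (insert v J) vs"
  proof (rule Cons.IH)
    fix i assume "i < length vs"
    then show "Cs (vs ! i) \<subseteq> insert v J \<union> set (take i vs)" using Cons.prems(3)[of "Suc i"] by auto
  qed (use Cons.prems in auto)
  moreover have "v \<notin> J" using Cons.prems by simp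
  ultimately show ?case using m by (simp only: goodk.simps) blast
qed

lemma kap_sets:
  assumes "goodk Kc M J vs" "x \<in> space (PiM J M)"
  shows "sets (kap Kc M J vs x) = sets (PiM (J \<union> set vs) M)" "prob_space (kap Kc M J vs x)"
  using measurable_space[OF kap_meas[OF assms(1)] assms(2)] by (auto simp: space_prob_algebra)

lemma x0_space: "(\<lambda>_. undefined) \<in> space (PiM {} M)"
  by (simp add: space_PiM)

lemma Kc_emeas:
  assumes "k \<in> L \<rightarrow>\<^sub>M prob_algebra N" "B \<in> sets N"
  shows "(\<lambda>z. emeasure (k z) B) \<in> borel_measurable L"
  by (rule measurable_compose[OF measurable_prob_algebraD[OF assms(1)] measurable_emeasure_subprob_algebra[OF assms(2)]])

lemma chain_step:
  assumes g: "goodk Kc M {} (p @ [w])" and E: "\<And>u. u \<in> insert w (set p) \<Longrightarrow> E u \<in> sets (M u)"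
  shows "emeasure (kap Kc M {} (p @ [w]) (\<lambda>_. undefined)) (PiE (insert w (set p)) E)
    = (\<integral>\<^sup>+z. indicator (PiE (set p) E) z * emeasure (Kc w z) (E w) \<partial>kap Kc M {} p (\<lambda>_. undefined))"
proof -
  let ?x0 = "\<lambda>_. undefined"
  have gp: "goodk Kc M {} p" and gw: "goodk Kc M (set p) [w]" using g by (auto simp: goodk_append)
  have Kw: "Kc w \<in> PiM (set p) M \<rightarrow>\<^sub>M prob_algebra (M w)" and wp: "w \<notin> set p" using gw by auto
  have PiEs: "PiE (insert w (set p)) E \<in> sets (PiM ({} \<union> set (p @ [w])) M)"
    by (auto intro!: sets_PiM_I_finite E)
  have PiEs2: "PiE (set p) E \<in> sets (PiM ({} \<union> set p) M)"
    by (auto intro!: sets_PiM_I_finite E)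
  have "emeasure (kap Kc M {} (p @ [w]) ?x0) (PiE (insert w (set p)) E)
      = (\<integral>\<^sup>+z. indicator (PiE (insert w (set p)) E) z \<partial>kap Kc M {} (p @ [w]) ?x0)"
    using PiEs kap_sets(1)[OF g x0_space] by simp
  also have "\<dots> = itf Kc (p @ [w]) (indicator (PiE (insert w (set p)) E)) ?x0"
    by (rule kap_nn[OF g x0_space]) (use PiEs in simp)
  also have "\<dots> = itf Kc p (itf Kc [w] (indicator (PiE (insert w (set p)) E))) ?x0"
    by (rule itf_append)
  also have "\<dots> = itf Kc p (\<lambda>z. indicator (PiE (set p) E) z * emeasure (Kc w z) (E w)) ?x0"
  proof (rule itf_cong[OF gp x0_space])
    fix z assume z: "z \<in> space (PiM ({} \<union> set p) M)"
    have sk: "sets (Kc w z) = sets (M w)" using measurable_space[OF Kw] z by (auto simp: space_prob_algebra)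
    have "itf Kc [w] (indicator (PiE (insert w (set p)) E)) z = (\<integral>\<^sup>+y. indicator (PiE (set p) E) z * indicator (E w) y \<partial>Kc w z)"
    proof (simp, rule nn_integral_cong)
      fix y
      show "indicator (PiE (insert w (set p)) E) (z(w := y)) = indicator (PiE (set p) E) z * (indicator (E w) y :: ennreal)"
        using z wp by (auto simp: indicator_def space_PiM PiE_iff extensional_def)
    qed
    also have "\<dots> = indicator (PiE (set p) E) z * emeasure (Kc w z) (E w)"
      by (rule nn_integral_cmult_indicator) (use sk E in auto)
    finally show "itf Kc [w] (indicator (PiE (insert w (set p)) E)) z = indicator (PiE (set p) E) z * emeasure (Kc w z) (E w)" .
  qed
  also have "\<dots> = (\<integral>\<^sup>+z. indicator (PiE (set p) E) z * emeasure (Kc w z) (E w) \<partial>kap Kc M {} p ?x0)"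
    by (rule kap_nn[OF gp x0_space, symmetric]) (use PiEs2 Kc_emeas[OF Kw E[of w]] in simp)
  finally show ?thesis .
qed


lemma rf_split:
  assumes g: "goodk Kc M {} (p @ w # q)" and B: "\<And>u. u \<in> set (p @ w # q) \<Longrightarrow> B u \<in> sets (M u)"
    and Bq: "\<And>u. u \<in> set q \<Longrightarrow> B u = space (M u)"
  shows "itf Kc (p @ w # q) (indicator {z. \<forall>u\<in>set (p @ w # q). z u \<in> B u}) (\<lambda>_. undefined)
    = (\<integral>\<^sup>+z. indicator (PiE (set p) B) z * emeasure (Kc w z) (B w) \<partial>kap Kc M {} p (\<lambda>_. undefined))"
proof -
  let ?x0 = "\<lambda>_. undefined"
  have gp: "goodk Kc M {} p" and gwq: "goodk Kc M (set p) (w # q)" using g by (auto simp: goodk_append)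
  have Kw: "Kc w \<in> PiM (set p) M \<rightarrow>\<^sub>M prob_algebra (M w)" and gq: "goodk Kc M (insert w (set p)) q"
    using gwq by auto
  have dis: "distinct (p @ w # q)" using goodk_distinct[OF g] by simp
  define Qp where "Qp = {z. \<forall>u\<in>set p. z u \<in> B u}"
  define Qq where "Qq = {z. \<forall>u\<in>set q. z u \<in> B u}"
  have PiEs2: "PiE (set p) B \<in> sets (PiM ({} \<union> set p) M)"
    by (auto intro!: sets_PiM_I_finite B)
  have "itf Kc (p @ w # q) (indicator {z. \<forall>u\<in>set (p @ w # q). z u \<in> B u}) ?x0
      = itf Kc p (itf Kc (w # q) (indicator {z. \<forall>u\<in>set (p @ w # q). z u \<in> B u})) ?x0"
    by (rule itf_append)
  also have "\<dots> = itf Kc p (\<lambda>z. indicator (PiE (set p) B) z * emeasure (Kc w z) (B w)) ?x0"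
  proof (rule itf_cong[OF gp x0_space])
    fix z assume z: "z \<in> space (PiM ({} \<union> set p) M)"
    have sk: "sets (Kc w z) = sets (M w)" "space (Kc w z) = space (M w)"
      using measurable_space[OF Kw] z by (auto simp: space_prob_algebra intro!: sets_eq_imp_space_eq)
    have f1: "indicator {z. \<forall>u\<in>set (p @ w # q). z u \<in> B u} = (\<lambda>z'. indicator Qp z' * indicator {z'. z' w \<in> B w} z' * indicator Qq z' :: ennreal)"
      by (auto simp: indicator_def fun_eq_iff Qp_def Qq_def)
    have "itf Kc (w # q) (\<lambda>z'. indicator Qp z' * (indicator {z'. z' w \<in> B w} z' * indicator Qq z')) z
        = indicator Qp z * itf Kc (w # q) (\<lambda>z'. indicator {z'. z' w \<in> B w} z' * indicator Qq z') z"
      by (rule itf_pull) (use dis in \<open>auto simp: Qp_def\<close>)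
    also have "indicator Qp z = indicator (PiE (set p) B) z"
      using z by (auto simp: indicator_def Qp_def space_PiM PiE_iff)
    also have "itf Kc (w # q) (\<lambda>z'. indicator {z'. z' w \<in> B w} z' * indicator Qq z') z
        = (\<integral>\<^sup>+y. indicator (B w) y \<partial>Kc w z)"
    proof (simp only: itf.simps, rule nn_integral_cong)
      fix y assume y: "y \<in> space (Kc w z)"
      have zy: "z(w := y) \<in> space (PiM (insert w (set p)) M)"
        using upd_space[of z "set p" M y w] z y sk by simp
      have "itf Kc q (\<lambda>z'. indicator {z'. z' w \<in> B w} z' * indicator Qq z') (z(w := y))
          = indicator {z'. z' w \<in> B w} (z(w := y)) * itf Kc q (indicator Qq) (z(w := y))"
        by (rule itf_pull) (use dis in auto)
      also have "itf Kc q (indicator Qq) (z(w := y)) = itf Kc q (\<lambda>_. 1) (z(w := y))"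
      proof (rule itf_cong[OF gq zy])
        fix z' assume "z' \<in> space (PiM (insert w (set p) \<union> set q) M)"
        then show "indicator Qq z' = (1::ennreal)" using Bq by (auto simp: Qq_def space_PiM PiE_iff indicator_def)
      qed
      also have "\<dots> = 1" by (rule itf_const1[OF gq zy])
      also have "indicator {z'. z' w \<in> B w} (z(w := y)) * (1::ennreal) = indicator (B w) y"
        by (simp add: indicator_def)
      finally show "itf Kc q (\<lambda>z'. indicator {z'. z' w \<in> B w} z' * indicator Qq z') (z(w := y)) = indicator (B w) y" .
    qed
    also have "\<dots> = emeasure (Kc w z) (B w)" using sk B[of w] by simp
    finally show "itf Kc (w # q) (indicator {z. \<forall>u\<in>set (p @ w # q). z u \<in> B u}) z = indicator (PiE (set p) B) z * emeasure (Kc w z) (B w)"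
      unfolding f1 by (simp add: mult.assoc)
  qed
  also have "\<dots> = (\<integral>\<^sup>+z. indicator (PiE (set p) B) z * emeasure (Kc w z) (B w) \<partial>kap Kc M {} p ?x0)"
    by (rule kap_nn[OF gp x0_space, symmetric]) (use PiEs2 Kc_emeas[OF Kw B[of w]] in simp)
  finally show ?thesis .
qed

lemma restr_meas:
  assumes "sets P = sets (PiM I M)" "Y \<subseteq> I"
  shows "(\<lambda>x. restrict x Y) \<in> P \<rightarrow>\<^sub>M PiM Y M"
  using measurable_restrict_subset[OF assms(2), of M] by (simp add: measurable_cong_sets[OF assms(1) refl])

lemma comp_meas:
  assumes "sets P = sets (PiM I M)" "w \<in> I"
  shows "(\<lambda>x. x w) \<in> P \<rightarrow>\<^sub>M M w"
  using measurable_component_singleton[OF assms(2), of M] by (simp add: measurable_cong_sets[OF assms(1) refl])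

lemma set_meas:
  assumes "sets P = sets (PiM I M)" "w \<in> I" "Y \<subseteq> I" "B \<in> sets (M w)" "T \<in> sets (PiM Y M)"
  shows "{x \<in> space P. x w \<in> B \<and> restrict x Y \<in> T} \<in> sets P"
proof -
  have "{x \<in> space P. x w \<in> B \<and> restrict x Y \<in> T} = ((\<lambda>x. x w) -` B \<inter> space P) \<inter> ((\<lambda>x. restrict x Y) -` T \<inter> space P)"
    by auto
  then show ?thesis
    using measurable_sets[OF comp_meas[OF assms(1,2)] assms(4)] measurable_sets[OF restr_meas[OF assms(1,3)] assms(5)] by auto
qed

lemma eqI_PiM:
  assumes "finite Y" "sets Q1 = sets (PiM Y M)" "sets Q2 = sets (PiM Y M)"
    "emeasure Q1 (space (PiM Y M)) \<noteq> \<infinity>"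
    "\<And>E. (\<And>u. u \<in> Y \<Longrightarrow> E u \<in> sets (M u)) \<Longrightarrow> emeasure Q1 (PiE Y E) = emeasure Q2 (PiE Y E)"
  shows "Q1 = Q2"
proof (rule measure_eqI_PiM_finite[OF assms(1,2,3)])
  show "range (\<lambda>_. space (PiM Y M)) \<subseteq> prod_algebra Y M"
    using space_in_prod_algebra[of Y M] by (auto simp: space_PiM)
qed (use assms in auto)

lemma nu_eq:
  assumes "sets P = sets (PiM I M)" "Y \<subseteq> I" "f \<in> borel_measurable P" "T \<in> sets (PiM Y M)"
  shows "emeasure (distr (density P f) (PiM Y M) (\<lambda>x. restrict x Y)) T = (\<integral>\<^sup>+x. f x * indicator T (restrict x Y) \<partial>P)"
proof -
  have m: "(\<lambda>x. restrict x Y) \<in> density P f \<rightarrow>\<^sub>M PiM Y M"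
    using restr_meas[OF assms(1,2)] by (simp add: measurable_cong_sets[OF sets_density refl])
  have s: "(\<lambda>x. restrict x Y) -` T \<inter> space P \<in> sets P" using measurable_sets[OF restr_meas[OF assms(1,2)] assms(4)] .
  have "emeasure (distr (density P f) (PiM Y M) (\<lambda>x. restrict x Y)) T = emeasure (density P f) ((\<lambda>x. restrict x Y) -` T \<inter> space P)"
    using emeasure_distr[OF m assms(4)] by simp
  also have "\<dots> = (\<integral>\<^sup>+x. f x * indicator ((\<lambda>x. restrict x Y) -` T \<inter> space P) x \<partial>P)"
    by (rule emeasure_density[OF assms(3) s])
  also have "\<dots> = (\<integral>\<^sup>+x. f x * indicator T (restrict x Y) \<partial>P)"
    by (rule nn_integral_cong) (auto simp: indicator_def)
  finally show ?thesis .
qed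

lemma chain_markov:
  assumes P: "prob_space P" and sP: "sets P = sets (PiM I M)" and wsI: "set ws \<subseteq> I" and g: "goodk Kc M {} ws"
    and kid: "\<And>i T B. i < length ws \<Longrightarrow> T \<in> sets (PiM (set (take i ws)) M) \<Longrightarrow> B \<in> sets (M (ws ! i)) \<Longrightarrow>
       emeasure P {x \<in> space P. x (ws ! i) \<in> B \<and> restrict x (set (take i ws)) \<in> T}
       = (\<integral>\<^sup>+x. indicator T (restrict x (set (take i ws))) * emeasure (Kc (ws ! i) (restrict x (set (take i ws)))) B \<partial>P)"
  shows "i \<le> length ws \<Longrightarrow> distr P (PiM (set (take i ws)) M) (\<lambda>x. restrict x (set (take i ws))) = kap Kc M {} (take i ws) (\<lambda>_. undefined)"
proof (induction i)
  interpret prob_space P by fact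
  case 0
  let ?x0 = "(\<lambda>_. undefined) :: 'a \<Rightarrow> 'b"
  have "distr P (PiM {} M) (\<lambda>x. restrict x {}) = return (PiM {} M) ?x0"
  proof (rule eqI_PiM)
    show "emeasure (distr P (PiM {} M) (\<lambda>x. restrict x {})) (space (PiM {} M)) \<noteq> \<infinity>"
      by (simp add: emeasure_distr restr_meas[OF sP] )
    fix E :: "'a \<Rightarrow> 'b set"
    have e: "PiE {} E = {?x0}" by simp
    have sx: "{?x0} \<in> sets (PiM {} M)" using sets.top[of "PiM {} M"] by (simp add: space_PiM)
    have "emeasure (distr P (PiM {} M) (\<lambda>x. restrict x {})) {?x0} = emeasure P (space P)"
      by (subst emeasure_distr[OF restr_meas[OF sP] sx]) (auto simp: space_PiM intro!: arg_cong[where f="emeasure P"])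
    then show "emeasure (distr P (PiM {} M) (\<lambda>x. restrict x {})) (PiE {} E) = emeasure (return (PiM {} M) ?x0) (PiE {} E)"
      using emeasure_return[OF sx, of ?x0] by (simp add: emeasure_space_1 space_PiM)
  qed auto
  then show ?case by simp
next
  interpret prob_space P by fact
  case (Suc i)
  let ?x0 = "(\<lambda>_. undefined) :: 'a \<Rightarrow> 'b"
  let ?p = "take i ws" and ?w = "ws ! i"
  have i: "i < length ws" using Suc.prems by simp
  have tk: "take (Suc i) ws = ?p @ [?w]" by (rule take_Suc_conv_app_nth[OF i])
  have "goodk Kc M {} (take (Suc i) ws)"
    using g goodk_append[of Kc M "{}" "take (Suc i) ws" "drop (Suc i) ws"] by (simp del: take_Suc)
  then have gpw: "goodk Kc M {} (?p @ [?w])" using tk by simp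
  have gp: "goodk Kc M {} ?p" and Kw: "Kc ?w \<in> PiM (set ?p) M \<rightarrow>\<^sub>M prob_algebra (M ?w)" and wp: "?w \<notin> set ?p"
    using gpw by (auto simp: goodk_append)
  have YI: "set ?p \<subseteq> I" and wI: "?w \<in> I" using wsI i set_take_subset[of i ws] by (auto simp: nth_mem)
  have IH: "distr P (PiM (set ?p) M) (\<lambda>x. restrict x (set ?p)) = kap Kc M {} ?p ?x0" by (rule Suc.IH) (use i in simp)
  have "distr P (PiM (insert ?w (set ?p)) M) (\<lambda>x. restrict x (insert ?w (set ?p))) = kap Kc M {} (?p @ [?w]) ?x0"
  proof (rule eqI_PiM)
    show "sets (kap Kc M {} (?p @ [?w]) ?x0) = sets (PiM (insert ?w (set ?p)) M)"
      using kap_sets(1)[OF gpw x0_space] by simp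
    have pd: "prob_space (distr P (PiM (insert ?w (set ?p)) M) (\<lambda>x. restrict x (insert ?w (set ?p))))"
      by (rule prob_space_distr[OF restr_meas[OF sP]]) (use YI wI in auto)
    show "emeasure (distr P (PiM (insert ?w (set ?p)) M) (\<lambda>x. restrict x (insert ?w (set ?p)))) (space (PiM (insert ?w (set ?p)) M)) \<noteq> \<infinity>"
      using prob_space.emeasure_space_1[OF pd] by simp
    fix E assume E: "\<And>u. u \<in> insert ?w (set ?p) \<Longrightarrow> E u \<in> sets (M u)"
    have PiEs: "PiE (insert ?w (set ?p)) E \<in> sets (PiM (insert ?w (set ?p)) M)"
      by (auto intro!: sets_PiM_I_finite E)
    have PiEs2: "PiE (set ?p) E \<in> sets (PiM (set ?p) M)"
      by (auto intro!: sets_PiM_I_finite E)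
    have sp: "space P = space (PiM I M)" using sP by (rule sets_eq_imp_space_eq)
    have "emeasure (distr P (PiM (insert ?w (set ?p)) M) (\<lambda>x. restrict x (insert ?w (set ?p)))) (PiE (insert ?w (set ?p)) E)
        = emeasure P ((\<lambda>x. restrict x (insert ?w (set ?p))) -` PiE (insert ?w (set ?p)) E \<inter> space P)"
      by (rule emeasure_distr[OF restr_meas[OF sP] PiEs]) (use YI wI in auto)
    also have "\<dots> = emeasure P {x \<in> space P. x ?w \<in> E ?w \<and> restrict x (set ?p) \<in> PiE (set ?p) E}"
      by (rule arg_cong[where f="emeasure P"]) (auto simp: PiE_iff)
    also have "\<dots> = (\<integral>\<^sup>+x. indicator (PiE (set ?p) E) (restrict x (set ?p)) * emeasure (Kc ?w (restrict x (set ?p))) (E ?w) \<partial>P)"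
      by (rule kid[OF i PiEs2 E]) simp
    also have "\<dots> = (\<integral>\<^sup>+z. indicator (PiE (set ?p) E) z * emeasure (Kc ?w z) (E ?w) \<partial>distr P (PiM (set ?p) M) (\<lambda>x. restrict x (set ?p)))"
      by (rule nn_integral_distr[OF restr_meas[OF sP YI], symmetric]) (use PiEs2 Kc_emeas[OF Kw E[of ?w]] in simp)
    also have "\<dots> = (\<integral>\<^sup>+z. indicator (PiE (set ?p) E) z * emeasure (Kc ?w z) (E ?w) \<partial>kap Kc M {} ?p ?x0)"
      unfolding IH ..
    also have "\<dots> = emeasure (kap Kc M {} (?p @ [?w]) ?x0) (PiE (insert ?w (set ?p)) E)"
      by (rule chain_step[OF gpw E, symmetric])
    finally show "emeasure (distr P (PiM (insert ?w (set ?p)) M) (\<lambda>x. restrict x (insert ?w (set ?p)))) (PiE (insert ?w (set ?p)) E)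
      = emeasure (kap Kc M {} (?p @ [?w]) ?x0) (PiE (insert ?w (set ?p)) E)" .
  qed auto
  then show ?case unfolding tk by (simp only: set_append list.set Un_insert_right Un_empty_right)
qed


lemma ind_eq:
  assumes "sets P = sets (PiM I M)" "w \<in> I" "Y \<subseteq> I" "B \<in> sets (M w)" "T \<in> sets (PiM Y M)"
  shows "emeasure P {x \<in> space P. x w \<in> B \<and> restrict x Y \<in> T}
     = (\<integral>\<^sup>+x. indicator {x \<in> space P. x w \<in> B} x * indicator T (restrict x Y) \<partial>P)"
proof -
  have "(\<integral>\<^sup>+x. indicator {x \<in> space P. x w \<in> B} x * indicator T (restrict x Y) \<partial>P)
      = (\<integral>\<^sup>+x. indicator {x \<in> space P. x w \<in> B \<and> restrict x Y \<in> T} x \<partial>P)"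
    by (rule nn_integral_cong) (auto simp: indicator_def)
  also have "\<dots> = emeasure P {x \<in> space P. x w \<in> B \<and> restrict x Y \<in> T}"
    using set_meas[OF assms] by simp
  finally show ?thesis by simp
qed

lemma rf_kid:
  assumes P: "prob_space P" and sP: "sets P = sets (PiM I M)" and wsI: "set ws \<subseteq> I" and g: "goodk Kc M {} ws"
    and rf: "\<And>B. (\<And>u. u \<in> set ws \<Longrightarrow> B u \<in> sets (M u)) \<Longrightarrow>
        emeasure (distr P (PiM (set ws) M) (\<lambda>x. restrict x (set ws))) (PiE (set ws) B)
        = itf Kc ws (indicator {z. \<forall>u\<in>set ws. z u \<in> B u}) (\<lambda>_. undefined)"
    and i: "i < length ws" and T: "T \<in> sets (PiM (set (take i ws)) M)" and B': "B' \<in> sets (M (ws ! i))"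
  shows "emeasure P {x \<in> space P. x (ws ! i) \<in> B' \<and> restrict x (set (take i ws)) \<in> T}
       = (\<integral>\<^sup>+x. indicator T (restrict x (set (take i ws))) * emeasure (Kc (ws ! i) (restrict x (set (take i ws)))) B' \<partial>P)"
proof -
  interpret prob_space P by fact
  let ?x0 = "(\<lambda>_. undefined) :: 'a \<Rightarrow> 'b"
  define p where "p = take i ws"
  define w where "w = ws ! i"
  define q where "q = drop (Suc i) ws"
  define Y where "Y = set p"
  have ws_eq: "ws = p @ w # q" unfolding p_def w_def q_def by (rule id_take_nth_drop[OF i])
  have g': "goodk Kc M {} (p @ w # q)" using g ws_eq by simp
  have gp: "goodk Kc M {} p" and Kw: "Kc w \<in> PiM Y M \<rightarrow>\<^sub>M prob_algebra (M w)"
    using g' by (auto simp: goodk_append Y_def)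
  have dis: "distinct (p @ w # q)" using goodk_distinct[OF g'] by simp
  have YI: "Y \<subseteq> I" and wI: "w \<in> I" and qI: "set q \<subseteq> I" using wsI ws_eq by (auto simp: Y_def)
  have sp: "space P = space (PiM I M)" using sP by (rule sets_eq_imp_space_eq)
  have B'w: "B' \<in> sets (M w)" using B' by (simp add: w_def)
  have kp_sets: "sets (kap Kc M {} p ?x0) = sets (PiM Y M)" using kap_sets(1)[OF gp x0_space] by (simp add: Y_def)
  have prod: "emeasure P {x \<in> space P. x w \<in> B'' \<and> restrict x Y \<in> PiE Y E}
      = (\<integral>\<^sup>+z. indicator (PiE Y E) z * emeasure (Kc w z) B'' \<partial>kap Kc M {} p ?x0)"
    if E: "\<And>u. u \<in> Y \<Longrightarrow> E u \<in> sets (M u)" and B'': "B'' \<in> sets (M w)" for E B''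
  proof -
    define B where "B u = (if u \<in> Y then E u else if u = w then B'' else space (M u))" for u
    have Bs: "\<And>u. u \<in> set (p @ w # q) \<Longrightarrow> B u \<in> sets (M u)" by (auto simp: B_def E B'' Y_def)
    have Bq: "\<And>u. u \<in> set q \<Longrightarrow> B u = space (M u)" using dis by (auto simp: B_def Y_def)
    have PiEs: "PiE (set ws) B \<in> sets (PiM (set ws) M)"
      using Bs ws_eq by (auto intro!: sets_PiM_I_finite)
    have "emeasure (distr P (PiM (set ws) M) (\<lambda>x. restrict x (set ws))) (PiE (set ws) B)
        = emeasure P ((\<lambda>x. restrict x (set ws)) -` PiE (set ws) B \<inter> space P)"
      by (rule emeasure_distr[OF restr_meas[OF sP wsI] PiEs])
    also have "\<dots> = emeasure P {x \<in> space P. x w \<in> B'' \<and> restrict x Y \<in> PiE Y E}"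
    proof (rule arg_cong[where f="emeasure P"], rule set_eqI, rule iffI)
      fix x assume "x \<in> (\<lambda>x. restrict x (set ws)) -` PiE (set ws) B \<inter> space P"
      then have x: "x \<in> space P" "\<forall>u\<in>set ws. x u \<in> B u" by (auto simp: PiE_iff)
      have wY: "w \<notin> Y" using dis by (simp add: Y_def)
      have xE: "x u \<in> E u" if "u \<in> Y" for u
        using x(2)[rule_format, of u] that ws_eq by (simp add: B_def Y_def)
      have xw: "x w \<in> B''" using x(2)[rule_format, of w] wY ws_eq by (simp add: B_def)
      show "x \<in> {x \<in> space P. x w \<in> B'' \<and> restrict x Y \<in> PiE Y E}"
        using x(1) xE xw by (auto simp: PiE_iff)
    next
      fix x assume "x \<in> {x \<in> space P. x w \<in> B'' \<and> restrict x Y \<in> PiE Y E}"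
      then have x: "x \<in> space P" "x w \<in> B''" "\<forall>u\<in>Y. x u \<in> E u" by (auto simp: PiE_iff)
      have xs: "x u \<in> space (M u)" if "u \<in> I" for u using x(1) sp that by (auto simp: space_PiM PiE_iff)
      show "x \<in> (\<lambda>x. restrict x (set ws)) -` PiE (set ws) B \<inter> space P"
        using x xs wsI by (auto simp: B_def PiE_iff Y_def)
    qed
    finally have l: "emeasure (distr P (PiM (set ws) M) (\<lambda>x. restrict x (set ws))) (PiE (set ws) B)
      = emeasure P {x \<in> space P. x w \<in> B'' \<and> restrict x Y \<in> PiE Y E}" .
    have "emeasure (distr P (PiM (set ws) M) (\<lambda>x. restrict x (set ws))) (PiE (set ws) B)
       = itf Kc (p @ w # q) (indicator {z. \<forall>u\<in>set (p @ w # q). z u \<in> B u}) ?x0"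
      using rf[of B] Bs ws_eq by simp
    also have "\<dots> = (\<integral>\<^sup>+z. indicator (PiE (set p) B) z * emeasure (Kc w z) (B w) \<partial>kap Kc M {} p ?x0)"
      by (rule rf_split[OF g' Bs Bq])
    also have "PiE (set p) B = PiE Y E" unfolding Y_def by (rule PiE_cong) (auto simp: B_def Y_def)
    also have "B w = B''" using dis by (simp add: B_def Y_def)
    finally have r: "emeasure (distr P (PiM (set ws) M) (\<lambda>x. restrict x (set ws))) (PiE (set ws) B)
      = (\<integral>\<^sup>+z. indicator (PiE Y E) z * emeasure (Kc w z) B'' \<partial>kap Kc M {} p ?x0)" .
    show ?thesis by (rule trans[OF l[symmetric] r])
  qed
  have marg: "distr P (PiM Y M) (\<lambda>x. restrict x Y) = kap Kc M {} p ?x0"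
  proof (rule eqI_PiM)
    show "finite Y" by (simp add: Y_def)
    have pd: "prob_space (distr P (PiM Y M) (\<lambda>x. restrict x Y))"
      by (rule prob_space_distr[OF restr_meas[OF sP YI]])
    show "emeasure (distr P (PiM Y M) (\<lambda>x. restrict x Y)) (space (PiM Y M)) \<noteq> \<infinity>"
      using prob_space.emeasure_space_1[OF pd] by simp
    fix E assume E: "\<And>u. u \<in> Y \<Longrightarrow> E u \<in> sets (M u)"
    have PiEs: "PiE Y E \<in> sets (PiM Y M)" using E by (auto intro!: sets_PiM_I_finite simp: Y_def)
    have "emeasure (distr P (PiM Y M) (\<lambda>x. restrict x Y)) (PiE Y E) = emeasure P ((\<lambda>x. restrict x Y) -` PiE Y E \<inter> space P)"
      by (rule emeasure_distr[OF restr_meas[OF sP YI] PiEs])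
    also have "\<dots> = emeasure P {x \<in> space P. x w \<in> space (M w) \<and> restrict x Y \<in> PiE Y E}"
      using sp wI by (intro arg_cong[where f="emeasure P"]) (auto simp: space_PiM PiE_iff extensional_def)
    also have "\<dots> = (\<integral>\<^sup>+z. indicator (PiE Y E) z * emeasure (Kc w z) (space (M w)) \<partial>kap Kc M {} p ?x0)"
      by (rule prod[OF E]) (auto intro: sets.top)
    also have "\<dots> = (\<integral>\<^sup>+z. indicator (PiE Y E) z \<partial>kap Kc M {} p ?x0)"
    proof (rule nn_integral_cong)
      fix z assume "z \<in> space (kap Kc M {} p ?x0)"
      then have z: "z \<in> space (PiM Y M)" using sets_eq_imp_space_eq[OF kp_sets] by simp
      have "Kc w z \<in> space (prob_algebra (M w))" by (rule measurable_space[OF Kw z])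
      then have "prob_space (Kc w z)" "space (Kc w z) = space (M w)"
        by (auto simp: space_prob_algebra intro!: sets_eq_imp_space_eq)
      then have "emeasure (Kc w z) (space (M w)) = 1" using prob_space.emeasure_space_1 by metis
      then show "indicator (PiE Y E) z * emeasure (Kc w z) (space (M w)) = indicator (PiE Y E) z" by simp
    qed
    also have "\<dots> = emeasure (kap Kc M {} p ?x0) (PiE Y E)" using PiEs kp_sets by simp
    finally show "emeasure (distr P (PiM Y M) (\<lambda>x. restrict x Y)) (PiE Y E) = emeasure (kap Kc M {} p ?x0) (PiE Y E)" .
  qed (use kp_sets in auto)
  have f2m: "(\<lambda>x. emeasure (Kc w (restrict x Y)) B') \<in> borel_measurable P"
    by (rule measurable_compose[OF restr_meas[OF sP YI] Kc_emeas[OF Kw B'w]])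
  have prodkid: "emeasure P {x \<in> space P. x w \<in> B' \<and> restrict x Y \<in> PiE Y E}
      = (\<integral>\<^sup>+x. indicator (PiE Y E) (restrict x Y) * emeasure (Kc w (restrict x Y)) B' \<partial>P)"
    if E: "\<And>u. u \<in> Y \<Longrightarrow> E u \<in> sets (M u)" for E
  proof -
    have PiEs: "PiE Y E \<in> sets (PiM Y M)" using E by (auto intro!: sets_PiM_I_finite simp: Y_def)
    have "emeasure P {x \<in> space P. x w \<in> B' \<and> restrict x Y \<in> PiE Y E}
      = (\<integral>\<^sup>+z. indicator (PiE Y E) z * emeasure (Kc w z) B' \<partial>kap Kc M {} p ?x0)"
      by (rule prod[OF E B'w])
    also have "\<dots> = (\<integral>\<^sup>+z. indicator (PiE Y E) z * emeasure (Kc w z) B' \<partial>distr P (PiM Y M) (\<lambda>x. restrict x Y))"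
      unfolding marg ..
    also have "\<dots> = (\<integral>\<^sup>+x. indicator (PiE Y E) (restrict x Y) * emeasure (Kc w (restrict x Y)) B' \<partial>P)"
      by (rule nn_integral_distr[OF restr_meas[OF sP YI]]) (use PiEs Kc_emeas[OF Kw B'w] in simp)
    finally show ?thesis .
  qed
  define SX where "SX = {x \<in> space P. x w \<in> B'}"
  have SXs: "SX \<in> sets P"
  proof -
    have "SX = (\<lambda>x. x w) -` B' \<inter> space P" unfolding SX_def by auto
    then show ?thesis using measurable_sets[OF comp_meas[OF sP wI] B'w] by simp
  qed
  define nu1 where "nu1 = distr (density P (indicator SX)) (PiM Y M) (\<lambda>x. restrict x Y)"
  define nu2 where "nu2 = distr (density P (\<lambda>x. emeasure (Kc w (restrict x Y)) B')) (PiM Y M) (\<lambda>x. restrict x Y)"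
  have nu1e: "emeasure nu1 T' = emeasure P {x \<in> space P. x w \<in> B' \<and> restrict x Y \<in> T'}" if "T' \<in> sets (PiM Y M)" for T'
    unfolding nu1_def SX_def
    by (subst nu_eq[OF sP YI _ that]) (use SXs[unfolded SX_def] ind_eq[OF sP wI YI B'w that] in auto)
  have nu2e: "emeasure nu2 T' = (\<integral>\<^sup>+x. indicator T' (restrict x Y) * emeasure (Kc w (restrict x Y)) B' \<partial>P)" if "T' \<in> sets (PiM Y M)" for T'
    unfolding nu2_def by (subst nu_eq[OF sP YI f2m that]) (simp add: mult.commute)
  have "nu1 = nu2"
  proof (rule eqI_PiM)
    show "finite Y" by (simp add: Y_def)
    show "sets nu1 = sets (PiM Y M)" "sets nu2 = sets (PiM Y M)" by (simp_all add: nu1_def nu2_def)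
    show "emeasure nu1 (space (PiM Y M)) \<noteq> \<infinity>"
      using nu1e[OF sets.top] set_meas[OF sP wI YI B'w sets.top] by (simp add: emeasure_eq_measure)
    fix E assume E: "\<And>u. u \<in> Y \<Longrightarrow> E u \<in> sets (M u)"
    have PiEs: "PiE Y E \<in> sets (PiM Y M)" using E by (auto intro!: sets_PiM_I_finite simp: Y_def)
    show "emeasure nu1 (PiE Y E) = emeasure nu2 (PiE Y E)"
      using nu1e[OF PiEs] nu2e[OF PiEs] prodkid[OF E] by simp
  qed
  have "emeasure P {x \<in> space P. x w \<in> B' \<and> restrict x Y \<in> T}
     = (\<integral>\<^sup>+x. indicator T (restrict x Y) * emeasure (Kc w (restrict x Y)) B' \<partial>P)"
    using nu1e[OF T[folded p_def, folded Y_def]] nu2e[OF T[folded p_def, folded Y_def]] \<open>nu1 = nu2\<close> by simp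
  then show ?thesis by (simp add: Y_def p_def w_def)
qed

lemma pred_ind:
  assumes "ancestral G A" "is_hedg G"
  shows "Pred_le (induced G A) r w = induced (Pred_le G r w) (A - {x \<in> nodes G. (w, x) \<in> r})"
proof -
  have AV: "A \<subseteq> nodes G" using assms(1) by (simp add: ancestral_def)
  have "{x \<in> nodes (induced G A). (w, x) \<in> r} = A \<inter> {x \<in> nodes G. (w, x) \<in> r}"
    using AV by (auto simp: induced_def)
  then show ?thesis unfolding Pred_le_def using graph_comm[OF assms] by simp
qed

lemma pb_sub:
  assumes "ancestral G A" "strict_linear_order_on (nodes G) r" "u \<in> A"
  shows "pred_bd (induced G A) r u \<subseteq> {x \<in> A. (x, u) \<in> r}"
proof
  fix x assume "x \<in> pred_bd (induced G A) r u"
  then have x: "x \<in> A" "(u, x) \<notin> r" "x \<noteq> u"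
    by (auto simp: pred_bd_def moral_nbrs_def Pred_le_def marg_def induced_def moral_adj_def)
  have AV: "A \<subseteq> nodes G" using assms(1) by (simp add: ancestral_def)
  show "x \<in> {x \<in> A. (x, u) \<in> r}" using slo_props(3)[OF assms(2), of x u] x AV assms(3) by auto
qed


lemma restr_Z: "Z \<subseteq> Y \<Longrightarrow> restrict (restrict x Y) Z = restrict x Z"
  by (auto simp: restrict_def fun_eq_iff)

theorem mainTheorem15:
  fixes G :: "'v hedg"
    and M :: "'v \<Rightarrow> 'x measure"
    and P :: "('v \<Rightarrow> 'x) measure"
    and r :: "('v \<times> 'v) set"
    and K :: "'v \<Rightarrow> 'v set \<Rightarrow> ('v \<Rightarrow> 'x) \<Rightarrow> 'x measure"
  assumes "is_hedg G"
    and "\<forall>v \<in> nodes G. standard_borel (M v)"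
    and "prob_space P" and "sets P = sets (PiM (nodes G) M)"
    and "strict_linear_order_on (nodes G) r"
    and "\<forall>v \<in> nodes G. \<forall>C \<subseteq> nodes G. is_rcd P M v C (K v C)"
  shows "ordered_local_markov G M P r \<longleftrightarrow> recursive_factorization G M P r K"
proof -
  note hg = assms(1) and P = assms(3) and sP = assms(4) and slo = assms(5) and rcd = assms(6)
  note so = slo_props[OF slo]
  let ?x0 = "(\<lambda>_. undefined) :: 'v \<Rightarrow> 'x"
  have finV: "finite (nodes G)" using hg by (simp add: is_hedg_def)
  have Kmeas: "K u C \<in> PiM C M \<rightarrow>\<^sub>M prob_algebra (M u)" if "u \<in> nodes G" "C \<subseteq> nodes G" for u C
    using rcd that by (simp add: is_rcd_def)
  have srt: "set (sorted_nodes r A) = A" "distinct (sorted_nodes r A)"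
     "\<And>i. i < length (sorted_nodes r A) \<Longrightarrow> set (take i (sorted_nodes r A)) = {x \<in> A. (x, sorted_nodes r A ! i) \<in> r}"
    if "ancestral G A" for A
  proof -
    have AV: "A \<subseteq> nodes G" using that by (simp add: ancestral_def)
    have fA: "finite A" using finV AV by (rule finite_subset[rotated])
    note sp = sorted_nodes_props[OF slo fA AV]
    show "set (sorted_nodes r A) = A" "distinct (sorted_nodes r A)" using sp by auto
    fix i assume "i < length (sorted_nodes r A)"
    then show "set (take i (sorted_nodes r A)) = {x \<in> A. (x, sorted_nodes r A ! i) \<in> r}"
      using sorted_take[OF so(1,2) sp(3) sp(2)] sp(1) by simp
  qed
  have gk: "goodk (\<lambda>u x. K u (pred_bd (induced G A) r u) (restrict x (pred_bd (induced G A) r u))) M {} (sorted_nodes r A)"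
    if anc: "ancestral G A" for A
  proof (rule goodk_intro)
    have AV: "A \<subseteq> nodes G" using anc by (simp add: ancestral_def)
    show "distinct (sorted_nodes r A)" using srt[OF anc] by simp
    show "set (sorted_nodes r A) \<inter> {} = {}" by simp
    fix i assume i: "i < length (sorted_nodes r A)"
    have "sorted_nodes r A ! i \<in> A" using srt(1)[OF anc] nth_mem[OF i] by simp
    then show "pred_bd (induced G A) r (sorted_nodes r A ! i) \<subseteq> {} \<union> set (take i (sorted_nodes r A))"
      using pb_sub[OF anc slo] srt(3)[OF anc i] by simp
  next
    fix u assume "u \<in> set (sorted_nodes r A)"
    then have u: "u \<in> A" using srt(1)[OF anc] by simp
    have AV: "A \<subseteq> nodes G" using anc by (simp add: ancestral_def)
    show "K u (pred_bd (induced G A) r u) \<in> PiM (pred_bd (induced G A) r u) M \<rightarrow>\<^sub>M prob_algebra (M u)"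
      by (rule Kmeas) (use u AV pb_sub[OF anc slo u] in auto)
  qed
  show ?thesis
  proof
    assume olm: "ordered_local_markov G M P r"
    show "recursive_factorization G M P r K" unfolding recursive_factorization_def
    proof (intro allI impI)
      fix A B assume h: "ancestral G A \<and> (\<forall>v\<in>A. B v \<in> sets (M v))"
      then have anc: "ancestral G A" and Bs: "\<And>v. v \<in> A \<Longrightarrow> B v \<in> sets (M v)" by auto
      have AV: "A \<subseteq> nodes G" using anc by (simp add: ancestral_def)
      define Cs where "Cs = pred_bd (induced G A) r"
      define Kc where "Kc = (\<lambda>u x. K u (Cs u) (restrict x (Cs u)))"
      define ws where "ws = sorted_nodes r A"
      have g: "goodk Kc M {} ws" using gk[OF anc] unfolding Kc_def Cs_def ws_def .
      have wsA: "set ws = A" using srt(1)[OF anc] by (simp add: ws_def)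
      have kid: "emeasure P {x \<in> space P. x (ws ! i) \<in> B' \<and> restrict x (set (take i ws)) \<in> T}
       = (\<integral>\<^sup>+x. indicator T (restrict x (set (take i ws))) * emeasure (Kc (ws ! i) (restrict x (set (take i ws)))) B' \<partial>P)"
        if i: "i < length ws" and T: "T \<in> sets (PiM (set (take i ws)) M)" and B': "B' \<in> sets (M (ws ! i))" for i T B'
      proof -
        define w where "w = ws ! i"
        define Y where "Y = set (take i ws)"
        define Aw where "Aw = A - {x \<in> nodes G. (w, x) \<in> r}"
        have wA: "w \<in> A" using wsA nth_mem[OF i] by (simp add: w_def)
        have wV: "w \<in> nodes G" using wA AV by auto
        have Y: "Y = {x \<in> A. (x, w) \<in> r}" using srt(3)[OF anc, of i] i by (simp add: Y_def w_def ws_def)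
        have ancw: "ancestral (Pred_le G r w) Aw"
          unfolding Aw_def Pred_le_def by (rule anc_marg[OF anc hg])
        have wAw: "w \<in> Aw" using wA so(2) by (auto simp: Aw_def irrefl_def)
        have ci: "cond_indep P M {w} (Aw - {w}) (moral_nbrs (induced (Pred_le G r w) Aw) w)"
          using olm wV ancw wAw unfolding ordered_local_markov_def by blast
        have AwY: "Aw - {w} = Y"
        proof
          show "Aw - {w} \<subseteq> Y"
          proof
            fix x assume x: "x \<in> Aw - {w}"
            then have "x \<in> A" "x \<noteq> w" "(w, x) \<notin> r" using AV by (auto simp: Aw_def)
            then show "x \<in> Y" using so(3)[of x w] AV wV Y by auto
          qed
          show "Y \<subseteq> Aw - {w}"
          proof
            fix x assume "x \<in> Y"
            then have x: "x \<in> A" "(x, w) \<in> r" using Y by auto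
            have "(w, x) \<notin> r" using x(2) so(1,2) by (auto simp: irrefl_def dest: transD)
            moreover have "x \<noteq> w" using x(2) so(2) by (auto simp: irrefl_def)
            ultimately show "x \<in> Aw - {w}" using x by (auto simp: Aw_def)
          qed
        qed
        have ZC: "moral_nbrs (induced (Pred_le G r w) Aw) w = Cs w"
          unfolding Cs_def pred_bd_def pred_ind[OF anc hg] Aw_def ..
        have ZY: "Cs w \<subseteq> Y" using pb_sub[OF anc slo wA] Y by (simp add: Cs_def)
        have YV: "Y \<subseteq> nodes G" using Y AV by auto
        have rw: "is_rcd P M w (Cs w) (K w (Cs w))" using rcd wV ZY YV by auto
        have ci': "cond_indep P M {w} Y (Cs w)" using ci AwY ZC by simp
        have "emeasure P {x \<in> space P. x w \<in> B' \<and> restrict x Y \<in> T}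
           = (\<integral>\<^sup>+x. indicator T (restrict x Y) * emeasure (K w (Cs w) (restrict x (Cs w))) B' \<partial>P)"
          by (rule CI_to_KID[OF P sP wV ZY YV ci' rw]) (use T B' in \<open>simp_all add: Y_def w_def\<close>)
        also have "\<dots> = (\<integral>\<^sup>+x. indicator T (restrict x Y) * emeasure (Kc w (restrict x Y)) B' \<partial>P)"
          unfolding Kc_def restr_Z[OF ZY] ..
        finally show ?thesis by (simp add: Y_def w_def)
      qed
      have wsV: "set ws \<subseteq> nodes G" using wsA AV by simp
      have ch: "distr P (PiM (set (take (length ws) ws)) M) (\<lambda>x. restrict x (set (take (length ws) ws))) = kap Kc M {} (take (length ws) ws) ?x0"
        by (rule chain_markov[OF P sP wsV g kid]) simp_all
      then have ch': "distr P (PiM A M) (\<lambda>x. restrict x A) = kap Kc M {} ws ?x0" using wsA by simp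
      have PiEs: "PiE A B \<in> sets (PiM ({} \<union> set ws) M)"
        using Bs wsA finV AV by (auto intro!: sets_PiM_I_finite intro: finite_subset)
      have "emeasure (distr P (PiM A M) (\<lambda>x. restrict x A)) (PiE A B) = emeasure (kap Kc M {} ws ?x0) (PiE A B)"
        unfolding ch' ..
      also have "\<dots> = (\<integral>\<^sup>+z. indicator (PiE A B) z \<partial>kap Kc M {} ws ?x0)"
        using PiEs kap_sets(1)[OF g x0_space] by simp
      also have "\<dots> = itf Kc ws (indicator (PiE A B)) ?x0"
        by (rule kap_nn[OF g x0_space]) (use PiEs in simp)
      also have "\<dots> = itf Kc ws (indicator {z. \<forall>u\<in>set ws. z u \<in> B u}) ?x0"
        by (rule itf_cong[OF g x0_space]) (use wsA in \<open>auto simp: space_PiM PiE_iff indicator_def\<close>)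
      also have "\<dots> = iter_int K Cs B ws ?x0"
        by (rule iter_itf[symmetric]) (use srt(2)[OF anc] in \<open>simp_all add: Kc_def ws_def\<close>)
      finally show "emeasure (distr P (PiM A M) (\<lambda>x. restrict x A)) (PiE A B)
          = iter_int K (pred_bd (induced G A) r) B (sorted_nodes r A) (\<lambda>_. undefined)"
        by (simp add: Cs_def ws_def)
    qed
  next
    assume rf: "recursive_factorization G M P r K"
    show "ordered_local_markov G M P r" unfolding ordered_local_markov_def
    proof (intro ballI allI impI)
      fix v A assume vV: "v \<in> nodes G" and h: "ancestral (Pred_le G r v) A \<and> v \<in> A"
      define U where "U = {x \<in> nodes G. (v, x) \<in> r}"
      have ancU: "ancestral (marg G U) A" using h by (simp add: Pred_le_def U_def)
      have vA: "v \<in> A" using h by simp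
      define Ah where "Ah = {x. \<exists>a\<in>A. (x, a) \<in> (edges G)\<^sup>*}"
      note ac = anc_closure[OF hg ancU, folded Ah_def]
      have ancAh: "ancestral G Ah" by (rule ac(1))
      have AhV: "Ah \<subseteq> nodes G" using ancAh by (simp add: ancestral_def)
      define Cs where "Cs = pred_bd (induced G Ah) r"
      define Kc where "Kc = (\<lambda>u x. K u (Cs u) (restrict x (Cs u)))"
      define ws where "ws = sorted_nodes r Ah"
      have g: "goodk Kc M {} ws" using gk[OF ancAh] unfolding Kc_def Cs_def ws_def .
      have wsA: "set ws = Ah" using srt(1)[OF ancAh] by (simp add: ws_def)
      have wsV: "set ws \<subseteq> nodes G" using wsA AhV by simp
      have vAh: "v \<in> Ah" using vA ac(3) by auto
      then obtain i where i: "i < length ws" "ws ! i = v" using wsA by (metis in_set_conv_nth)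
      define Y where "Y = set (take i ws)"
      have Y1: "Y = {x \<in> Ah. (x, v) \<in> r}" using srt(3)[OF ancAh, of i] i by (simp add: Y_def ws_def)
      have YA: "Y = A - {v}"
      proof
        show "Y \<subseteq> A - {v}"
        proof
          fix x assume "x \<in> Y"
          then have x: "x \<in> Ah" "(x, v) \<in> r" using Y1 by auto
          have "(v, x) \<notin> r" using x(2) so(1,2) by (auto simp: irrefl_def dest: transD)
          then have "x \<notin> U" by (simp add: U_def)
          moreover have "x \<noteq> v" using x(2) so(2) by (auto simp: irrefl_def)
          ultimately show "x \<in> A - {v}" using x ac(2) by auto
        qed
        show "A - {v} \<subseteq> Y"
        proof
          fix x assume x: "x \<in> A - {v}"
          then have xAh: "x \<in> Ah" "x \<notin> U" using ac(2) by auto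
          have xV: "x \<in> nodes G" using xAh AhV by auto
          then have "(v, x) \<notin> r" using xAh(2) by (simp add: U_def)
          then have "(x, v) \<in> r" using so(3)[of x v] xV vV x by auto
          then show "x \<in> Y" using Y1 xAh by auto
        qed
      qed
      have ZY: "Cs v \<subseteq> Y" using pb_sub[OF ancAh slo vAh] Y1 by (simp add: Cs_def)
      have YV: "Y \<subseteq> nodes G" using Y1 AhV by auto
      have ZC: "Cs v = moral_nbrs (induced (Pred_le G r v) A) v"
        unfolding Cs_def pred_bd_def pred_ind[OF ancAh hg] using ac(2) by (simp add: U_def)
      have rfAh: "emeasure (distr P (PiM (set ws) M) (\<lambda>x. restrict x (set ws))) (PiE (set ws) B)
        = itf Kc ws (indicator {z. \<forall>u\<in>set ws. z u \<in> B u}) ?x0"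
        if B: "\<And>u. u \<in> set ws \<Longrightarrow> B u \<in> sets (M u)" for B
      proof -
        have "emeasure (distr P (PiM Ah M) (\<lambda>x. restrict x Ah)) (PiE Ah B)
           = iter_int K (pred_bd (induced G Ah) r) B (sorted_nodes r Ah) ?x0"
          using rf ancAh B wsA unfolding recursive_factorization_def by auto
        also have "\<dots> = itf Kc ws (indicator {z. \<forall>u\<in>set ws. z u \<in> B u}) ?x0"
          unfolding ws_def[symmetric] Cs_def[symmetric]
          by (rule iter_itf) (use srt(2)[OF ancAh] in \<open>simp_all add: Kc_def ws_def\<close>)
        finally show ?thesis using wsA by simp
      qed
      have kid: "emeasure P {x \<in> space P. x v \<in> B' \<and> restrict x Y \<in> T}
         = (\<integral>\<^sup>+x. indicator T (restrict x Y) * emeasure (K v (Cs v) (restrict x (Cs v))) B' \<partial>P)"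
        if T: "T \<in> sets (PiM Y M)" and B': "B' \<in> sets (M v)" for T B'
      proof -
        have "emeasure P {x \<in> space P. x (ws ! i) \<in> B' \<and> restrict x (set (take i ws)) \<in> T}
           = (\<integral>\<^sup>+x. indicator T (restrict x (set (take i ws))) * emeasure (Kc (ws ! i) (restrict x (set (take i ws)))) B' \<partial>P)"
          by (rule rf_kid[OF P sP wsV g rfAh i(1)]) (use T B' i(2) in \<open>simp_all add: Y_def\<close>)
        also have "\<dots> = (\<integral>\<^sup>+x. indicator T (restrict x Y) * emeasure (K v (Cs v) (restrict x (Cs v))) B' \<partial>P)"
          unfolding Kc_def i(2) Y_def[symmetric] restr_Z[OF ZY] ..
        finally show ?thesis using i(2) by (simp add: Y_def)
      qed
      have km: "K v (Cs v) \<in> PiM (Cs v) M \<rightarrow>\<^sub>M prob_algebra (M v)"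
        by (rule Kmeas[OF vV]) (use ZY YV in auto)
      have "cond_indep P M {v} Y (Cs v)"
        by (rule KID_to_CI[OF P sP vV ZY YV km kid])
      then show "cond_indep P M {v} (A - {v}) (moral_nbrs (induced (Pred_le G r v) A) v)"
        using YA ZC by simp
    qed
  qed
qed

end
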